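(* Let $\alpha$ be a proper fraction ($0<\alpha<1$), let $u=(u_k)$ be a sequence with $u_k\neq0$ for all $k$, let $A=(a_{nk})$ be an infinite matrix and define $B=(b_{nk})$ by $$b_{nk}=\sum_{j=0}^n\Big(\sum_{i=0}^{n-j}(-1)^i\frac{\Gamma(\alpha+1)}{i!\,\Gamma(\alpha+1-i)}u_{i+j}\Big)a_{jk}\qquad(n,k\in\mathbb{N}).$$ Then: (i) $A\in(\ell_\infty:c_0(\Gamma,\Delta^{(\alpha)},u))$ iff $\lim_{n\to\infty}\sum_k|b_{nk}|=0$. (ii) $A\in(c:c_0(\Gamma,\Delta^{(\alpha)},u))$ iff $\sup_n\sum_k|b_{nk}|<\infty$, $\lim_{k\to\infty}b_{nk}=0$ for each $n$, and $\lim_{n\to\infty}\sum_k b_{nk}=0$. (iii) $A\in(c_0:c_0(\Gamma,\Delta^{(\alpha)},u))$ iff $\sup_n\sum_k|b_{nk}|<\infty$ and $\lim_{k\to\infty}b_{nk}=0$ for each $n$. (iv) $A\in(\ell_1:c_0(\Gamma,\Delta^{(\alpha)},u))$ iff $\lim_{k\to\infty}b_{nk}=0$ for each $n$ and $\sup_{n,k}|b_{nk}|<\infty$. (v) $A\in(\ell_\infty:c(\Gamma,\Delta^{(\alpha)},u))$ iff $\lim_{n\to\infty}b_{nk}=\alpha_k$ exists for each $k$ and $\lim_{m\to\infty}\sum_k|b_{mk}|=\sum_k|\alpha_k|$. (vi) $A\in(c:c(\Gamma,\Delta^{(\alpha)},u))$ iff $\sup_n\sum_k|b_{nk}|<\infty$,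 $\lim_{n\to\infty}b_{nk}$ exists for each $k$, and $\lim_{n\to\infty}\sum_k b_{nk}$ exists. (vii) $A\in(c_0:c(\Gamma,\Delta^{(\alpha)},u))$ iff $\sup_n\sum_k|b_{nk}|<\infty$ and $\lim_{n\to\infty}b_{nk}$ exists for each $k$. (viii) $A\in(\ell_1:c(\Gamma,\Delta^{(\alpha)},u))$ iff $\lim_{n\to\infty}b_{nk}$ exists for each $k$ and $\sup_{n,k}|b_{nk}|<\infty$.
   Context: $\omega$ is the space of all real or complex sequences; $\ell_\infty$, $c$, $c_0$, $\ell_1$ are the bounded, convergent, null and absolutely summable sequences; $\mathbb{N}=\{0,1,2,\dots\}$; $\Gamma$ is the gamma function. For $x\in\omega$, $\Delta^{(\alpha)}x_k=\sum_{i=0}^{\infty}(-1)^i\frac{\Gamma(\alpha+1)}{i!\,\Gamma(\alpha+1-i)}x_{k-i}$ with $x_j=0$ for $j<0$. For $\mu\in\{c_0,c\}$, $\mu(\Gamma,\Delta^{(\alpha)},u)=\{x\in\omega:(\sum_{j=0}^k u_j\Delta^{(\alpha)}x_j)_k\in\mu\}$. For sequence spaces $X,Y$, $(X:Y)$ is the class of matrices $A$ such that for every $x\in X$ the series $(Ax)_n=\sum_k a_{nk}x_k$ converge for all $n$ and $Ax\in Y$. *)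

theory Defs
  imports "HOL-Analysis.Analysis"
begin

definition frac_coeff :: "real \<Rightarrow> nat \<Rightarrow> real" where
  "frac_coeff \<alpha> i = (-1) ^ i * Gamma (\<alpha> + 1) / (fact i * Gamma (\<alpha> + 1 - real i))"

text \<open>Fractional difference; terms with negative index are zero, so the sum is finite.\<close>
definition frac_diff :: "real \<Rightarrow> (nat \<Rightarrow> real) \<Rightarrow> nat \<Rightarrow> real" where
  "frac_diff \<alpha> x k = (\<Sum>i\<le>k. frac_coeff \<alpha> i * x (k - i))"

definition linf_space :: "(nat \<Rightarrow> real) set" where
  "linf_space = {x. bounded (range x)}"

definition c_space :: "(nat \<Rightarrow> real) set" where
  "c_space = {x. convergent x}"

definition c0_space :: "(nat \<Rightarrow> real) set" where
  "c0_space = {x. x \<longlonglongrightarrow> 0}"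

definition l1_space :: "(nat \<Rightarrow> real) set" where
  "l1_space = {x. summable (\<lambda>k. \<bar>x k\<bar>)}"

definition gen_space :: "(nat \<Rightarrow> real) set \<Rightarrow> real \<Rightarrow> (nat \<Rightarrow> real) \<Rightarrow> (nat \<Rightarrow> real) set" where
  "gen_space \<mu> \<alpha> u = {x. (\<lambda>k. \<Sum>j\<le>k. u j * frac_diff \<alpha> x j) \<in> \<mu>}"

definition matrix_class :: "(nat \<Rightarrow> real) set \<Rightarrow> (nat \<Rightarrow> real) set \<Rightarrow> (nat \<Rightarrow> nat \<Rightarrow> real) \<Rightarrow> bool" where
  "matrix_class X Y A \<longleftrightarrow>
     (\<forall>x\<in>X. (\<forall>n. summable (\<lambda>k. A n k * x k)) \<and> (\<lambda>n. \<Sum>k. A n k * x k) \<in> Y)"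

definition B_matrix :: "real \<Rightarrow> (nat \<Rightarrow> real) \<Rightarrow> (nat \<Rightarrow> nat \<Rightarrow> real) \<Rightarrow> nat \<Rightarrow> nat \<Rightarrow> real" where
  "B_matrix \<alpha> u A n k =
     (\<Sum>j\<le>n. (\<Sum>i\<le>n - j. frac_coeff \<alpha> i * u (i + j)) * A j k)"

end

theory Submission
  imports Defs
begin

lemma fc0: "\<alpha> > -1 \<Longrightarrow> frac_coeff \<alpha> 0 = 1"
proof -
  assume "\<alpha> > -1"
  hence "Gamma (\<alpha>+1) > 0" by (intro Gamma_real_pos) simp
  thus ?thesis unfolding frac_coeff_def by simp
qed

lemma tri:
  fixes F :: "nat \<Rightarrow> nat \<Rightarrow> real"
  shows "(\<Sum>k\<le>n. \<Sum>i\<le>k. F i (k - i)) = (\<Sum>m\<le>n. \<Sum>i\<le>n - m. F i m)"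
proof -
  have "(\<Sum>k\<le>n. \<Sum>i\<le>k. F i (k - i)) = (\<Sum>(i,j)\<in>{(i,j). i+j \<le> n}. F i j)"
    by (rule sum.triangle_reindex_eq[symmetric])
  also have "\<dots> = (\<Sum>(j,i)\<in>(SIGMA m:{..n}. {..n - m}). F i j)"
    by (rule sum.reindex_bij_witness[where i="\<lambda>(j,i). (i,j)" and j="\<lambda>(i,j). (j,i)"]) auto
  also have "\<dots> = (\<Sum>m\<le>n. \<Sum>i\<le>n - m. F i m)"
    by (subst sum.Sigma[symmetric]) auto
  finally show ?thesis .
qed

lemma B_expand: "B_matrix \<alpha> u A n k * x k =
   (\<Sum>j\<le>n. (\<Sum>i\<le>n - j. frac_coeff \<alpha> i * u (i + j)) * (A j k * x k))"
  unfolding B_matrix_def by (simp add: sum_distrib_right mult.assoc)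

lemma sum_eq_A_B:
  assumes fc: "frac_coeff \<alpha> 0 = 1" and u: "\<forall>k. u k \<noteq> 0"
  shows "(\<forall>n. summable (\<lambda>k. A n k * x k)) \<longleftrightarrow> (\<forall>n. summable (\<lambda>k. B_matrix \<alpha> u A n k * x k))"
proof
  assume H: "\<forall>n. summable (\<lambda>k. A n k * x k)"
  show "\<forall>n. summable (\<lambda>k. B_matrix \<alpha> u A n k * x k)"
    unfolding B_expand by (intro allI summable_sum summable_mult H[rule_format])
next
  assume H: "\<forall>n. summable (\<lambda>k. B_matrix \<alpha> u A n k * x k)"
  show "\<forall>n. summable (\<lambda>k. A n k * x k)"
  proof
    fix n show "summable (\<lambda>k. A n k * x k)"
    proof (induction n rule: less_induct)
      case (less n)
      let ?d = "\<lambda>j. (\<Sum>i\<le>n - j. frac_coeff \<alpha> i * u (i + j))"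
      have dn: "?d n = u n" using fc by simp
      have eq: "A n k * x k = (B_matrix \<alpha> u A n k * x k - (\<Sum>j<n. ?d j * (A j k * x k))) / u n" for k
        unfolding B_expand using u dn by (simp add: lessThan_Suc_atMost[symmetric] field_simps)
      have "summable (\<lambda>k. (B_matrix \<alpha> u A n k * x k - (\<Sum>j<n. ?d j * (A j k * x k))) / u n)"
        by (intro summable_divide summable_diff H[rule_format] summable_sum summable_mult less) auto
      thus ?case by (subst eq)
    qed
  qed
qed

lemma val_eq:
  assumes H: "\<forall>n. summable (\<lambda>k. A n k * x k)"
  shows "(\<Sum>j\<le>n. u j * frac_diff \<alpha> (\<lambda>m. \<Sum>k. A m k * x k) j) = (\<Sum>k. B_matrix \<alpha> u A n k * x k)"
proof -
  let ?y = "\<lambda>m. \<Sum>k. A m k * x k"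
  let ?F = "\<lambda>i m. frac_coeff \<alpha> i * u (i + m) * ?y m"
  have "(\<Sum>j\<le>n. u j * frac_diff \<alpha> ?y j) = (\<Sum>j\<le>n. \<Sum>i\<le>j. ?F i (j - i))"
    unfolding frac_diff_def sum_distrib_left
    by (intro sum.cong refl) (auto simp: mult_ac)
  also have "\<dots> = (\<Sum>m\<le>n. \<Sum>i\<le>n - m. ?F i m)" by (rule tri)
  also have "\<dots> = (\<Sum>m\<le>n. (\<Sum>i\<le>n - m. frac_coeff \<alpha> i * u (i + m)) * ?y m)"
    by (simp add: sum_distrib_right)
  also have "\<dots> = (\<Sum>m\<le>n. (\<Sum>k. (\<Sum>i\<le>n - m. frac_coeff \<alpha> i * u (i + m)) * (A m k * x k)))"
    by (intro sum.cong refl suminf_mult[symmetric] H[rule_format])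
  also have "\<dots> = (\<Sum>k. \<Sum>m\<le>n. (\<Sum>i\<le>n - m. frac_coeff \<alpha> i * u (i + m)) * (A m k * x k))"
    by (rule suminf_sum[symmetric]) (intro summable_mult H[rule_format])
  also have "\<dots> = (\<Sum>k. B_matrix \<alpha> u A n k * x k)" unfolding B_expand ..
  finally show ?thesis .
qed

lemma reduce:
  assumes fc: "frac_coeff \<alpha> 0 = 1" and u: "\<forall>k. u k \<noteq> 0"
  shows "matrix_class X (gen_space \<mu> \<alpha> u) A \<longleftrightarrow> matrix_class X \<mu> (B_matrix \<alpha> u A)"
  unfolding matrix_class_def gen_space_def
  using sum_eq_A_B[OF fc u] val_eq by (auto simp del: B_matrix_def)


lemma gliding:
  fixes P :: "nat \<Rightarrow> nat \<Rightarrow> nat \<Rightarrow> nat \<Rightarrow> bool"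
  assumes "\<And>j K N. \<exists>n\<ge>N. \<exists>K'>K. P j K n K'"
  shows "\<exists>ns Ks. strict_mono ns \<and> strict_mono Ks \<and> Ks 0 = 0 \<and> (\<forall>j. P j (Ks j) (ns j) (Ks (Suc j)))"
proof -
  define F where "F j st = (SOME p. fst p \<ge> fst st \<and> snd p > snd st \<and> P j (snd st) (fst p) (snd p))" for j st
  have F: "fst (F j st) \<ge> fst st \<and> snd (F j st) > snd st \<and> P j (snd st) (fst (F j st)) (snd (F j st))" for j st
  proof -
    obtain n K' where "n \<ge> fst st" "K' > snd st" "P j (snd st) n K'" using assms by blast
    hence "\<exists>p. fst p \<ge> fst st \<and> snd p > snd st \<and> P j (snd st) (fst p) (snd p)"
      by (intro exI[of _ "(n,K')"]) auto
    thus ?thesis unfolding F_def by (rule someI_ex)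
  qed
  define S where "S = rec_nat (F 0 (0,0)) (\<lambda>j st. F (Suc j) (Suc (fst st), snd st))"
  have S0: "S 0 = F 0 (0,0)" and SS: "S (Suc j) = F (Suc j) (Suc (fst (S j)), snd (S j))" for j
    by (simp_all add: S_def)
  define ns where "ns j = fst (S j)" for j
  define Ks where "Ks j = (case j of 0 \<Rightarrow> 0 | Suc i \<Rightarrow> snd (S i))" for j
  have "strict_mono ns"
  proof (rule strict_monoI_Suc)
    fix j show "ns j < ns (Suc j)"
      using F[where j="Suc j" and st="(Suc (fst (S j)), snd (S j))"] by (simp add: ns_def SS)
  qed
  moreover have "strict_mono Ks"
  proof (rule strict_monoI_Suc)
    fix j show "Ks j < Ks (Suc j)"
      using F[where j="0" and st="(0,0)"] F[where j="j" and st="(Suc (fst (S (j - 1))), snd (S (j - 1)))"]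
      by (cases j) (auto simp: Ks_def S0 SS)
  qed
  moreover have "P j (Ks j) (ns j) (Ks (Suc j))" for j
    using F[where j="0" and st="(0,0)"] F[where j="j" and st="(Suc (fst (S (j - 1))), snd (S (j - 1)))"]
    by (cases j) (auto simp: Ks_def ns_def S0 SS)
  ultimately show ?thesis by (intro exI[of _ ns] exI[of _ Ks]) (auto simp: Ks_def)
qed

definition blk :: "(nat \<Rightarrow> nat) \<Rightarrow> nat \<Rightarrow> nat" where
  "blk Ks k = (LEAST j. k < Ks (Suc j))"

lemma blk_eq:
  assumes "strict_mono Ks" "Ks j \<le> k" "k < Ks (Suc j)"
  shows "blk Ks k = j"
  unfolding blk_def
proof (rule Least_equality)
  show "k < Ks (Suc j)" by fact
  fix i assume "k < Ks (Suc i)"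
  show "j \<le> i"
  proof (rule ccontr)
    assume "\<not> j \<le> i" hence "Suc i \<le> j" by simp
    hence "Ks (Suc i) \<le> Ks j" using assms(1) by (simp add: strict_mono_less_eq)
    thus False using assms \<open>k < Ks (Suc i)\<close> by simp
  qed
qed

lemma blk_props:
  assumes "strict_mono Ks" "Ks 0 = 0"
  shows "Ks (blk Ks k) \<le> k \<and> k < Ks (Suc (blk Ks k))"
proof -
  have ex: "k < Ks (Suc k)" using assms(1) strict_mono_imp_increasing[OF assms(1), of "Suc k"] by simp
  have 1: "k < Ks (Suc (blk Ks k))" unfolding blk_def by (rule LeastI[of _ k]) (rule ex)
  have 2: "Ks (blk Ks k) \<le> k"
  proof (cases "blk Ks k")
    case 0 thus ?thesis using assms by simp
  next
    case (Suc i)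
    hence "\<not> k < Ks (Suc i)" using not_less_Least[of i "\<lambda>j. k < Ks (Suc j)"] unfolding blk_def by simp
    thus ?thesis using Suc by simp
  qed
  show ?thesis using 1 2 by simp
qed

lemma blk_ge:
  assumes "strict_mono Ks" "Ks 0 = 0" "Ks j \<le> k"
  shows "j \<le> blk Ks k"
proof (rule ccontr)
  assume "\<not> j \<le> blk Ks k" hence "Suc (blk Ks k) \<le> j" by simp
  hence "Ks (Suc (blk Ks k)) \<le> Ks j" using assms(1) by (simp add: strict_mono_less_eq)
  thus False using blk_props[OF assms(1,2), of k] assms(3) by simp
qed


lemma sum_split_lt:
  fixes f :: "nat \<Rightarrow> real"
  assumes "A \<le> B" shows "(\<Sum>k<B. f k) = (\<Sum>k<A. f k) + (\<Sum>k\<in>{A..<B}. f k)"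
proof -
  have eq: "{..<B} = {..<A} \<union> {A..<B}" using assms by auto
  show ?thesis by (subst eq, rule sum.union_disjoint) auto
qed

lemma split3:
  fixes f :: "nat \<Rightarrow> real"
  assumes "summable f" "A \<le> B"
  shows "suminf f = (\<Sum>k<A. f k) + (\<Sum>k\<in>{A..<B}. f k) + (\<Sum>i. f (i + B))"
  using suminf_split_initial_segment[OF assms(1), of B] sum_split_lt[OF assms(2), of f] by simp

lemma absmul: "\<bar>x\<bar> \<le> X \<Longrightarrow> \<bar>r * x\<bar> \<le> X * \<bar>r\<bar>" for r x X :: real
proof -
  assume "\<bar>x\<bar> \<le> X"
  hence "\<bar>x\<bar> * \<bar>r\<bar> \<le> X * \<bar>r\<bar>" by (rule mult_right_mono) simp
  thus ?thesis by (simp add: abs_mult mult.commute)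
qed

lemma head_bound:
  fixes r x :: "nat \<Rightarrow> real"
  assumes "\<forall>k. \<bar>x k\<bar> \<le> X"
  shows "\<bar>\<Sum>k<A. r k * x k\<bar> \<le> X * (\<Sum>k<A. \<bar>r k\<bar>)"
proof -
  have "\<bar>\<Sum>k<A. r k * x k\<bar> \<le> (\<Sum>k<A. \<bar>r k * x k\<bar>)" by (rule sum_abs)
  also have "\<dots> \<le> (\<Sum>k<A. X * \<bar>r k\<bar>)"
    by (intro sum_mono absmul) (use assms in auto)
  finally show ?thesis by (simp add: sum_distrib_left)
qed

lemma tail_bound:
  fixes r x :: "nat \<Rightarrow> real"
  assumes "summable (\<lambda>k. \<bar>r k\<bar>)" "\<forall>k. \<bar>x k\<bar> \<le> X"
  shows "\<bar>\<Sum>i. r (i + B) * x (i + B)\<bar> \<le> X * (\<Sum>i. \<bar>r (i + B)\<bar>)"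
proof -
  have s1: "summable (\<lambda>i. \<bar>r (i + B)\<bar>)" using assms(1) by (subst summable_iff_shift)
  have s2: "summable (\<lambda>i. X * \<bar>r (i + B)\<bar>)" using s1 by (rule summable_mult)
  have le: "\<bar>r (i + B) * x (i + B)\<bar> \<le> X * \<bar>r (i + B)\<bar>" for i
    using assms(2) by (intro absmul) auto
  have s3: "summable (\<lambda>i. \<bar>r (i + B) * x (i + B)\<bar>)"
    by (rule summable_comparison_test'[OF s2]) (use le in simp)
  have "\<bar>\<Sum>i. r (i + B) * x (i + B)\<bar> \<le> (\<Sum>i. \<bar>r (i + B) * x (i + B)\<bar>)"
    by (rule summable_rabs[OF s3])
  also have "\<dots> \<le> (\<Sum>i. X * \<bar>r (i + B)\<bar>)" by (rule suminf_le[OF le s3 s2])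
  finally show ?thesis using suminf_mult[OF s1, of X] by simp
qed

lemma abs_split3:
  fixes r :: "nat \<Rightarrow> real"
  assumes "summable (\<lambda>k. \<bar>r k\<bar>)" "A \<le> B"
  shows "(\<Sum>k\<in>{A..<B}. \<bar>r k\<bar>) = (\<Sum>k. \<bar>r k\<bar>) - (\<Sum>k<A. \<bar>r k\<bar>) - (\<Sum>i. \<bar>r (i + B)\<bar>)"
  using split3[OF assms] by simp

lemma summable_mult_bounded:
  fixes r x :: "nat \<Rightarrow> real"
  assumes "summable (\<lambda>k. \<bar>r k\<bar>)" "\<forall>k. \<bar>x k\<bar> \<le> X"
  shows "summable (\<lambda>k. r k * x k)"
proof (rule summable_comparison_test'[of "\<lambda>k. X * \<bar>r k\<bar>"])
  show "summable (\<lambda>k. X * \<bar>r k\<bar>)" using assms(1) by (rule summable_mult)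
  fix n show "norm (r n * x n) \<le> X * \<bar>r n\<bar>"
    using assms(2) by (simp add: absmul)
qed

lemma block_sgn:
  fixes r x :: "nat \<Rightarrow> real"
  assumes "\<forall>k\<in>{A..<B}. x k = w * sgn (r k)"
  shows "(\<Sum>k\<in>{A..<B}. r k * x k) = w * (\<Sum>k\<in>{A..<B}. \<bar>r k\<bar>)"
  unfolding sum_distrib_left
  by (intro sum.cong refl) (use assms in \<open>auto simp: abs_sgn\<close>)

lemma blk_c0:
  assumes "strict_mono Ks" "Ks 0 = 0" "\<forall>k. \<bar>x k\<bar> \<le> 1 / (real (blk Ks k) + 1)"
  shows "x \<longlonglongrightarrow> 0"
proof -
  have fl: "filterlim (blk Ks) at_top sequentially"
    unfolding filterlim_at_top
    by (intro allI eventually_sequentiallyI[of "Ks _"]) (rule blk_ge[OF assms(1,2)])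
  have "(\<lambda>j. 1 / (real j + 1)) \<longlonglongrightarrow> 0"
    using LIMSEQ_inverse_real_of_nat by (simp add: inverse_eq_divide add.commute)
  hence "(\<lambda>k. 1 / (real (blk Ks k) + 1)) \<longlonglongrightarrow> 0"
    using filterlim_compose[OF _ fl] by blast
  thus ?thesis
    by (rule Lim_null_comparison[rotated]) (use assms(3) in auto)
qed

lemma blk_val:
  assumes "strict_mono Ks" "k \<in> {Ks j..<Ks (Suc j)}"
  shows "blk Ks k = j"
  using blk_eq[OF assms(1)] assms(2) by auto


lemma unbounded_partial:
  fixes f :: "nat \<Rightarrow> real"
  assumes "\<And>k. 0 \<le> f k" "\<not> summable f"
  shows "\<exists>n. (\<Sum>k<n. f k) > T"
  using summableI_nonneg_bounded[of f T] assms by (meson not_le)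

lemma row_l1_c0:
  fixes r :: "nat \<Rightarrow> real"
  assumes H: "\<And>x. x \<longlonglongrightarrow> 0 \<Longrightarrow> summable (\<lambda>k. r k * x k)"
  shows "summable (\<lambda>k. \<bar>r k\<bar>)"
proof (rule ccontr)
  assume ns: "\<not> summable (\<lambda>k. \<bar>r k\<bar>)"
  let ?P = "\<lambda>j K (n::nat) K'. (\<Sum>k\<in>{K..<K'}. \<bar>r k\<bar>) \<ge> real j + 1"
  have "\<exists>n\<ge>N. \<exists>K'>K. ?P j K n K'" for j K N
  proof -
    obtain K' where K': "(\<Sum>k<K'. \<bar>r k\<bar>) > real j + 1 + (\<Sum>k<K. \<bar>r k\<bar>)"
      using unbounded_partial[OF _ ns] by fastforce
    have "K < K'"
    proof (rule ccontr)
      assume "\<not> K < K'"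
      hence "(\<Sum>k<K'. \<bar>r k\<bar>) \<le> (\<Sum>k<K. \<bar>r k\<bar>)" by (intro sum_mono2) auto
      thus False using K' by simp
    qed
    moreover have "?P j K N K'" using K' sum_split_lt[of K K' "\<lambda>k. \<bar>r k\<bar>"] \<open>K < K'\<close> by simp
    ultimately show ?thesis by blast
  qed
  then obtain ns Ks where Ks: "strict_mono Ks" "Ks 0 = 0" and P: "\<And>j. ?P j (Ks j) (ns j) (Ks (Suc j))"
    using gliding[of ?P] by blast
  define x where "x k = sgn (r k) / (real (blk Ks k) + 1)" for k
  have "x \<longlonglongrightarrow> 0"
    by (rule blk_c0[OF Ks]) (auto simp: x_def abs_sgn_eq divide_le_cancel)
  hence sm: "summable (\<lambda>k. r k * x k)" by (rule H)
  let ?S = "\<lambda>n. \<Sum>k<n. r k * x k"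
  have L: "?S \<longlonglongrightarrow> suminf (\<lambda>k. r k * x k)" by (rule summable_LIMSEQ[OF sm])
  have L1: "(\<lambda>j. ?S (Ks j)) \<longlonglongrightarrow> suminf (\<lambda>k. r k * x k)"
    using LIMSEQ_subseq_LIMSEQ[OF L Ks(1)] by (simp add: o_def)
  have L2: "(\<lambda>j. ?S (Ks (Suc j))) \<longlonglongrightarrow> suminf (\<lambda>k. r k * x k)"
    using LIMSEQ_Suc[OF L1] .
  have "(\<lambda>j. ?S (Ks (Suc j)) - ?S (Ks j)) \<longlonglongrightarrow> 0"
    using tendsto_diff[OF L2 L1] by simp
  then obtain j where j: "\<bar>?S (Ks (Suc j)) - ?S (Ks j)\<bar> < 1"
    using LIMSEQ_D[of _ 0 1] by fastforce
  have le: "Ks j \<le> Ks (Suc j)" using Ks(1) by (simp add: strict_mono_less_eq)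
  have "?S (Ks (Suc j)) - ?S (Ks j) = (\<Sum>k\<in>{Ks j..<Ks (Suc j)}. r k * x k)"
    using sum_split_lt[OF le, of "\<lambda>k. r k * x k"] by simp
  also have "\<dots> = 1 / (real j + 1) * (\<Sum>k\<in>{Ks j..<Ks (Suc j)}. \<bar>r k\<bar>)"
    by (rule block_sgn) (auto simp: x_def blk_val[OF Ks(1)])
  also have "\<dots> \<ge> 1" using P[of j] by simp
  finally show False using j by simp
qed

lemma freq_big:
  fixes g :: "nat \<Rightarrow> real"
  assumes "\<And>n. 0 \<le> g n" "\<not> (\<exists>B. \<forall>n. g n \<le> B)"
  shows "\<exists>n\<ge>N. g n \<ge> T"
proof (rule ccontr)
  assume "\<not> ?thesis"
  hence lt: "\<forall>n\<ge>N. g n < T" by (meson not_le)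
  have "g n \<le> max T (\<Sum>m<N. g m)" for n
  proof (cases "n < N")
    case True
    hence "g n \<le> (\<Sum>m<N. g m)" by (intro member_le_sum) (auto simp: assms(1))
    thus ?thesis by simp
  next
    case False hence "g n < T" using lt by simp
    thus ?thesis by simp
  qed
  thus False using assms(2) by blast
qed

lemma tail_small:
  fixes f :: "nat \<Rightarrow> real"
  assumes "summable (\<lambda>k. \<bar>f k\<bar>)" "e > 0"
  shows "\<exists>K'>K. (\<Sum>i. \<bar>f (i + K')\<bar>) \<le> e"
proof -
  obtain N where N: "\<forall>m\<ge>N. norm (\<Sum>i. \<bar>f (i + m)\<bar>) < e"
    using suminf_exist_split[OF assms(2,1)] by blast
  show ?thesis using N[rule_format, of "max N (Suc K)"]
    by (intro exI[of _ "max N (Suc K)"]) auto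
qed

lemma unif_bound_c0:
  fixes M :: "nat \<Rightarrow> nat \<Rightarrow> real"
  assumes rows: "\<And>n. summable (\<lambda>k. \<bar>M n k\<bar>)"
    and cols: "\<And>k. \<exists>B. \<forall>n. \<bar>M n k\<bar> \<le> B"
    and H: "\<And>x. x \<longlonglongrightarrow> 0 \<Longrightarrow> \<exists>B. \<forall>n. \<bar>\<Sum>k. M n k * x k\<bar> \<le> B"
  shows "\<exists>B. \<forall>n. (\<Sum>k. \<bar>M n k\<bar>) \<le> B"
proof (rule ccontr)
  assume unb: "\<not> ?thesis"
  obtain cb where cb: "\<And>k n. \<bar>M n k\<bar> \<le> cb k" using cols by metis
  define C where "C K = (\<Sum>k<K. cb k)" for K
  have headC: "(\<Sum>k<K. \<bar>M n k\<bar>) \<le> C K" for K n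
    unfolding C_def by (intro sum_mono cb)
  let ?nrm = "\<lambda>n. \<Sum>k. \<bar>M n k\<bar>"
  let ?P = "\<lambda>j K n K'. ?nrm n \<ge> (real j + C K + 1) * (real j + 1) + C K + 1
             \<and> (\<Sum>i. \<bar>M n (i + K')\<bar>) \<le> 1"
  have "\<exists>n\<ge>N. \<exists>K'>K. ?P j K n K'" for j K N
  proof -
    obtain n where n: "n \<ge> N" "?nrm n \<ge> (real j + C K + 1) * (real j + 1) + C K + 1"
      using freq_big[of ?nrm] unb rows by (meson suminf_nonneg abs_ge_zero)
    obtain K' where "K' > K" "(\<Sum>i. \<bar>M n (i + K')\<bar>) \<le> 1"
      using tail_small[OF rows[of n], of 1] by auto
    thus ?thesis using n by blast
  qed
  then obtain ns Ks where Ks: "strict_mono Ks" "Ks 0 = 0" and P: "\<And>j. ?P j (Ks j) (ns j) (Ks (Suc j))"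
    using gliding[of ?P] by blast
  define x where "x k = sgn (M (ns (blk Ks k)) k) / (real (blk Ks k) + 1)" for k
  have xb: "\<forall>k. \<bar>x k\<bar> \<le> 1 / (real (blk Ks k) + 1)"
    by (auto simp: x_def abs_sgn_eq divide_le_cancel)
  have x1: "\<forall>k. \<bar>x k\<bar> \<le> 1"
  proof
    fix k have "1 / (real (blk Ks k) + 1) \<le> 1" by simp
    thus "\<bar>x k\<bar> \<le> 1" using xb by (meson order_trans)
  qed
  have "x \<longlonglongrightarrow> 0" by (rule blk_c0[OF Ks xb])
  then obtain B where B: "\<And>n. \<bar>\<Sum>k. M n k * x k\<bar> \<le> B" using H by blast
  obtain j :: nat where j: "real j > B" using reals_Archimedean2 by blast
  let ?r = "M (ns j)"
  have le: "Ks j \<le> Ks (Suc j)" using Ks(1) by (simp add: strict_mono_less_eq)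
  have sm: "summable (\<lambda>k. ?r k * x k)" by (rule summable_mult_bounded[OF rows x1])
  have dec: "(\<Sum>k. ?r k * x k) = (\<Sum>k<Ks j. ?r k * x k) + (\<Sum>k\<in>{Ks j..<Ks (Suc j)}. ?r k * x k)
      + (\<Sum>i. ?r (i + Ks (Suc j)) * x (i + Ks (Suc j)))"
    by (rule split3[OF sm le])
  have hd: "\<bar>\<Sum>k<Ks j. ?r k * x k\<bar> \<le> C (Ks j)"
    using head_bound[OF x1, of ?r "Ks j"] headC[where K="Ks j" and n="ns j"] by simp
  have tl: "\<bar>\<Sum>i. ?r (i + Ks (Suc j)) * x (i + Ks (Suc j))\<bar> \<le> 1"
    using tail_bound[OF rows x1, of "ns j" "Ks (Suc j)"] P[of j] by simp
  have blk_eq': "(\<Sum>k\<in>{Ks j..<Ks (Suc j)}. ?r k * x k) = 1 / (real j + 1) * (\<Sum>k\<in>{Ks j..<Ks (Suc j)}. \<bar>?r k\<bar>)"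
    by (rule block_sgn) (auto simp: x_def blk_val[OF Ks(1)])
  have ba: "(\<Sum>k\<in>{Ks j..<Ks (Suc j)}. \<bar>?r k\<bar>) \<ge> (real j + C (Ks j) + 1) * (real j + 1)"
    using abs_split3[OF rows le, of "ns j"] headC[where K="Ks j" and n="ns j"] P[of j] by linarith
  have "1 / (real j + 1) * (\<Sum>k\<in>{Ks j..<Ks (Suc j)}. \<bar>?r k\<bar>) \<ge> real j + C (Ks j) + 1"
    using ba by (simp add: field_simps)
  hence "\<bar>\<Sum>k. ?r k * x k\<bar> \<ge> real j" using dec hd tl blk_eq' by linarith
  thus False using B[of "ns j"] j by simp
qed

lemma abs_aux: "\<bar>a - w * b\<bar> \<le> c \<Longrightarrow> b \<ge> e \<Longrightarrow> w = 1 \<Longrightarrow> a \<ge> e - c" for a b c e w :: real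
  by (auto simp: abs_le_iff)

lemma schur:
  fixes M :: "nat \<Rightarrow> nat \<Rightarrow> real"
  assumes rows: "\<And>n. summable (\<lambda>k. \<bar>M n k\<bar>)"
    and bound: "\<And>n. (\<Sum>k. \<bar>M n k\<bar>) \<le> B"
    and cols: "\<And>k. (\<lambda>n. M n k) \<longlonglongrightarrow> a k"
    and H: "\<And>x. \<forall>k. \<bar>x k\<bar> \<le> 1 \<Longrightarrow> convergent (\<lambda>n. \<Sum>k. M n k * x k)"
  shows "summable (\<lambda>k. \<bar>a k\<bar>) \<and> (\<lambda>n. \<Sum>k. \<bar>M n k - a k\<bar>) \<longlonglongrightarrow> 0"
proof
  have "(\<Sum>k<K. \<bar>a k\<bar>) \<le> B" for K
  proof (rule LIMSEQ_le_const2)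
    show "(\<lambda>n. \<Sum>k<K. \<bar>M n k\<bar>) \<longlonglongrightarrow> (\<Sum>k<K. \<bar>a k\<bar>)"
      by (intro tendsto_sum tendsto_rabs cols)
    show "\<exists>N. \<forall>n\<ge>N. (\<Sum>k<K. \<bar>M n k\<bar>) \<le> B"
      using sum_le_suminf[OF rows, of "{..<K}"] bound by (meson abs_ge_zero finite_lessThan order_trans)
  qed
  thus sa: "summable (\<lambda>k. \<bar>a k\<bar>)" by (intro summableI_nonneg_bounded) auto
  define D where "D n k = M n k - a k" for n k
  have rowsD: "summable (\<lambda>k. \<bar>D n k\<bar>)" for n
  proof (rule summable_comparison_test'[of "\<lambda>k. \<bar>M n k\<bar> + \<bar>a k\<bar>"])
    show "summable (\<lambda>k. \<bar>M n k\<bar> + \<bar>a k\<bar>)" by (intro summable_add rows sa)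
  qed (auto simp: D_def)
  have colsD: "(\<lambda>n. D n k) \<longlonglongrightarrow> 0" for k
    unfolding D_def using tendsto_diff[OF cols[of k] tendsto_const[of "a k"]] by simp
  have HD: "convergent (\<lambda>n. \<Sum>k. D n k * x k)" if x1: "\<forall>k. \<bar>x k\<bar> \<le> 1" for x
  proof -
    have "(\<lambda>n. \<Sum>k. D n k * x k) = (\<lambda>n. (\<Sum>k. M n k * x k) - (\<Sum>k. a k * x k))"
    proof
      fix n
      have "(\<Sum>k. M n k * x k - a k * x k) = (\<Sum>k. M n k * x k) - (\<Sum>k. a k * x k)"
        by (rule suminf_diff[symmetric]; intro summable_mult_bounded[OF _ x1] rows sa)
      thus "(\<Sum>k. D n k * x k) = (\<Sum>k. M n k * x k) - (\<Sum>k. a k * x k)"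
        by (simp add: D_def left_diff_distrib)
    qed
    moreover have "convergent (\<lambda>n. (\<Sum>k. M n k * x k) - (\<Sum>k. a k * x k))"
      by (intro convergent_diff H[OF x1] convergent_const)
    ultimately show ?thesis by simp
  qed
  let ?nrm = "\<lambda>n. \<Sum>k. \<bar>D n k\<bar>"
  show "(\<lambda>n. \<Sum>k. \<bar>M n k - a k\<bar>) \<longlonglongrightarrow> 0"
  proof (rule ccontr)
    assume nt: "\<not> (\<lambda>n. \<Sum>k. \<bar>M n k - a k\<bar>) \<longlonglongrightarrow> 0"
    have "\<exists>d>0. \<forall>N. \<exists>n\<ge>N. ?nrm n \<ge> d"
    proof (rule ccontr)
      assume "\<not> ?thesis"
      hence A: "\<forall>r>0. \<exists>N. \<forall>n\<ge>N. ?nrm n < r" by (meson not_le)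
      have "\<forall>r>0. \<exists>N. \<forall>n\<ge>N. norm (?nrm n - 0) < r"
      proof (intro allI impI)
        fix r :: real assume "r > 0"
        then obtain N where "\<forall>n\<ge>N. ?nrm n < r" using A by blast
        thus "\<exists>N. \<forall>n\<ge>N. norm (?nrm n - 0) < r" using suminf_nonneg[OF rowsD] by auto
      qed
      hence "?nrm \<longlonglongrightarrow> 0" by (intro LIMSEQ_I) blast
      thus False using nt by (simp add: D_def)
    qed
    then obtain d where d: "d > 0" "\<And>N. \<exists>n\<ge>N. ?nrm n \<ge> d" by blast
    let ?P = "\<lambda>j K n K'. (\<Sum>k<K. \<bar>D n k\<bar>) \<le> d / 8 \<and> ?nrm n \<ge> d \<and> (\<Sum>i. \<bar>D n (i + K')\<bar>) \<le> d / 8"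
    have "\<exists>n\<ge>N. \<exists>K'>K. ?P j K n K'" for j K N
    proof -
      have "(\<lambda>n. \<Sum>k<K. \<bar>D n k\<bar>) \<longlonglongrightarrow> 0"
        using tendsto_sum[of "{..<K}" "\<lambda>k n. \<bar>D n k\<bar>" "\<lambda>k. 0"] tendsto_rabs_zero[OF colsD] by simp
      moreover have "d / 8 > 0" using d(1) by simp
      ultimately obtain N0 where N0: "\<forall>n\<ge>N0. norm ((\<Sum>k<K. \<bar>D n k\<bar>) - 0) < d / 8"
        using LIMSEQ_D by blast
      obtain n where n: "n \<ge> max N N0" "?nrm n \<ge> d" using d(2) by blast
      obtain K' where K': "K' > K" "(\<Sum>i. \<bar>D n (i + K')\<bar>) \<le> d / 8"
        using tail_small[OF rowsD[of n], of "d/8"] d(1) by auto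
      have "norm ((\<Sum>k<K. \<bar>D n k\<bar>) - 0) < d / 8" using N0 n(1) by simp
      hence "(\<Sum>k<K. \<bar>D n k\<bar>) \<le> d / 8" by simp
      thus ?thesis using n K' by (intro exI[of _ n]) auto
    qed
    then obtain ns Ks where Ks: "strict_mono Ks" "Ks 0 = 0" and ns: "strict_mono ns"
      and P: "\<And>j. ?P j (Ks j) (ns j) (Ks (Suc j))"
      using gliding[of ?P] by blast
    define w where "w j = (if odd j then 1 else 0::real)" for j :: nat
    define x where "x k = w (blk Ks k) * sgn (D (ns (blk Ks k)) k)" for k
    have x1: "\<forall>k. \<bar>x k\<bar> \<le> 1" by (auto simp: x_def w_def abs_sgn_eq)
    define y where "y j = (\<Sum>k. D (ns j) k * x k)" for j
    have yeq: "y = (\<lambda>j. \<Sum>k. D (ns j) k * x k)" by (simp add: y_def fun_eq_iff)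
    have "convergent y" unfolding yeq
      using convergent_subseq_convergent[OF HD[OF x1] ns] by (simp add: y_def o_def)
    hence cy: "Cauchy y" by (rule convergent_Cauchy)
    have d4: "d / 4 > 0" using d(1) by simp
    obtain N where N: "\<forall>m\<ge>N. \<forall>n\<ge>N. norm (y m - y n) < d / 4"
      using CauchyD[OF cy d4] by blast
    have est: "\<bar>y j - w j * (\<Sum>k\<in>{Ks j..<Ks (Suc j)}. \<bar>D (ns j) k\<bar>)\<bar> \<le> d / 4" for j
    proof -
      let ?r = "D (ns j)"
      have le: "Ks j \<le> Ks (Suc j)" using Ks(1) by (simp add: strict_mono_less_eq)
      have sm: "summable (\<lambda>k. ?r k * x k)" by (rule summable_mult_bounded[OF rowsD x1])
      have dec: "y j = (\<Sum>k<Ks j. ?r k * x k) + (\<Sum>k\<in>{Ks j..<Ks (Suc j)}. ?r k * x k)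
          + (\<Sum>i. ?r (i + Ks (Suc j)) * x (i + Ks (Suc j)))"
        unfolding y_def by (rule split3[OF sm le])
      have hd: "\<bar>\<Sum>k<Ks j. ?r k * x k\<bar> \<le> d / 8"
        using head_bound[OF x1, of ?r "Ks j"] P[of j] by simp
      have tl: "\<bar>\<Sum>i. ?r (i + Ks (Suc j)) * x (i + Ks (Suc j))\<bar> \<le> d / 8"
        using tail_bound[OF rowsD x1, of "ns j" "Ks (Suc j)"] P[of j] by simp
      have "(\<Sum>k\<in>{Ks j..<Ks (Suc j)}. ?r k * x k) = w j * (\<Sum>k\<in>{Ks j..<Ks (Suc j)}. \<bar>?r k\<bar>)"
        by (rule block_sgn) (auto simp: x_def blk_val[OF Ks(1)])
      thus ?thesis using dec hd tl by linarith
    qed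
    have ba: "(\<Sum>k\<in>{Ks j..<Ks (Suc j)}. \<bar>D (ns j) k\<bar>) \<ge> 3 * d / 4" for j
    proof -
      have le: "Ks j \<le> Ks (Suc j)" using Ks(1) by (simp add: strict_mono_less_eq)
      show ?thesis using abs_split3[OF rowsD le, of "ns j"] P[of j] by linarith
    qed
    have o: "y (Suc (2 * N)) \<ge> d / 2"
      using abs_aux[OF est[of "Suc (2*N)"] ba[of "Suc (2*N)"]] by (simp add: w_def)
    have e: "\<bar>y (2 * N)\<bar> \<le> d / 4" using est[of "2*N"] by (simp add: w_def)
    have "norm (y (Suc (2 * N)) - y (2 * N)) < d / 4" using N by simp
    thus False using o e by simp
  qed
qed


lemma strict_seq:
  fixes Q :: "nat \<Rightarrow> nat \<Rightarrow> bool"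
  assumes "\<And>j N. \<exists>n\<ge>N. Q j n"
  shows "\<exists>s. strict_mono s \<and> (\<forall>j. Q j (s j))"
proof -
  have "\<exists>n\<ge>N. \<exists>K'>K. Q j n" for j K N :: nat
  proof -
    obtain n where "n \<ge> N" "Q j n" using assms[where j=j and N=N] by blast
    thus ?thesis using lessI[of K] by blast
  qed
  then obtain ns Ks where "strict_mono ns" "\<And>j. Q j (ns j)"
    using gliding[of "\<lambda>j K n K'. Q j n"] by blast
  thus ?thesis by blast
qed

lemma sparse_l1:
  fixes s :: "nat \<Rightarrow> nat" and x :: "nat \<Rightarrow> real"
  assumes s: "strict_mono s" and z: "\<And>k. k \<notin> range s \<Longrightarrow> x k = 0"
    and b: "\<And>j. \<bar>x (s j)\<bar> \<le> c ^ j" and c: "0 \<le> c" "c < 1"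
  shows "summable (\<lambda>k. \<bar>x k\<bar>)"
proof -
  have "summable (\<lambda>j. \<bar>x (s j)\<bar>)"
    by (rule summable_comparison_test'[OF summable_geometric[of c]]) (use b c in auto)
  thus ?thesis using summable_mono_reindex[OF s, of "\<lambda>k. \<bar>x k\<bar>"] z by simp
qed

lemma row_bdd_l1:
  fixes r :: "nat \<Rightarrow> real"
  assumes H: "\<And>x. summable (\<lambda>k. \<bar>x k\<bar>) \<Longrightarrow> summable (\<lambda>k. r k * x k)"
  shows "\<exists>B. \<forall>k. \<bar>r k\<bar> \<le> B"
proof (rule ccontr)
  assume unb: "\<not> ?thesis"
  have "\<exists>n\<ge>N. \<bar>r n\<bar> \<ge> 2 ^ j" for j N
    using freq_big[of "\<lambda>k. \<bar>r k\<bar>"] unb by auto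
  then obtain s where s: "strict_mono s" and sj: "\<And>j. \<bar>r (s j)\<bar> \<ge> 2 ^ j"
    using strict_seq[of "\<lambda>j n. \<bar>r n\<bar> \<ge> 2 ^ j"] by blast
  have inj: "inj s" using s by (rule strict_mono_imp_inj_on)
  define x where "x k = (if k \<in> range s then sgn (r k) * (1/2) ^ (inv s k) else 0)" for k
  have xs: "x (s j) = sgn (r (s j)) * (1/2) ^ j" for j
    by (simp add: x_def inv_f_f[OF inj])
  have "summable (\<lambda>k. \<bar>x k\<bar>)"
    by (rule sparse_l1[OF s, of _ "1/2"]) (auto simp: x_def xs abs_mult abs_sgn_eq inv_f_f[OF inj])
  hence "summable (\<lambda>k. r k * x k)" by (rule H)
  hence "(\<lambda>k. r k * x k) \<longlonglongrightarrow> 0" by (rule summable_LIMSEQ_zero)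
  hence "(\<lambda>j. r (s j) * x (s j)) \<longlonglongrightarrow> 0"
    using LIMSEQ_subseq_LIMSEQ[OF _ s] by (simp add: o_def)
  from LIMSEQ_D[OF this zero_less_one] obtain j where j: "norm (r (s j) * x (s j) - 0) < 1"
    by blast
  have "\<bar>r (s j) * x (s j)\<bar> = \<bar>r (s j)\<bar> * (1/2) ^ j"
    by (simp add: xs abs_mult abs_sgn_eq power_one_over)
  also have "\<dots> \<ge> 2 ^ j * (1/2) ^ j" using sj[of j] by (intro mult_right_mono) auto
  also have "2 ^ j * (1/2) ^ j = (1::real)" by (simp add: power_one_over)
  finally show False using j by simp
qed

lemma unif_bound_l1:
  fixes M :: "nat \<Rightarrow> nat \<Rightarrow> real"
  assumes rowb: "\<And>n. \<exists>B. \<forall>k. \<bar>M n k\<bar> \<le> B"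
    and cols: "\<And>k. \<exists>B. \<forall>n. \<bar>M n k\<bar> \<le> B"
    and H: "\<And>x. summable (\<lambda>k. \<bar>x k\<bar>) \<Longrightarrow>
              (\<forall>n. summable (\<lambda>k. M n k * x k)) \<and> (\<exists>B. \<forall>n. \<bar>\<Sum>k. M n k * x k\<bar> \<le> B)"
  shows "\<exists>B. \<forall>n k. \<bar>M n k\<bar> \<le> B"
proof (rule ccontr)
  assume unb: "\<not> ?thesis"
  obtain cb where cb: "\<And>k n. \<bar>M n k\<bar> \<le> cb k" using cols by metis
  obtain rb where rb: "\<And>k n. \<bar>M n k\<bar> \<le> rb n" using rowb by metis
  have cb0: "cb k \<ge> 0" for k using cb[where k=k and n=0] by (meson abs_ge_zero order_trans)
  have rb0: "rb n \<ge> 0" for n using rb[where k=0 and n=n] by (meson abs_ge_zero order_trans)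
  define C where "C K = (\<Sum>k<K. cb k)" for K
  have C0: "C K \<ge> 0" for K unfolding C_def by (intro sum_nonneg cb0)
  have headC: "(\<Sum>k<K. \<bar>M n k\<bar>) \<le> C K" for K n
    unfolding C_def by (intro sum_mono cb)
  have big: "\<exists>n\<ge>N. \<exists>k\<ge>K. \<bar>M n k\<bar> \<ge> T" for T N K
  proof -
    define T' where "T' = max T ((\<Sum>n<N. rb n) + (\<Sum>k<K. cb k))"
    obtain n k where nk: "\<bar>M n k\<bar> > T'" using unb by (meson not_le)
    have "n \<ge> N"
    proof (rule ccontr)
      assume "\<not> n \<ge> N"
      hence "rb n \<le> (\<Sum>n<N. rb n)" by (intro member_le_sum) (auto simp: rb0)
      moreover have "(\<Sum>k<K. cb k) \<ge> 0" by (intro sum_nonneg cb0)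
      ultimately show False using nk rb[where k=k and n=n] unfolding T'_def by linarith
    qed
    moreover have "k \<ge> K"
    proof (rule ccontr)
      assume "\<not> k \<ge> K"
      hence "cb k \<le> (\<Sum>k<K. cb k)" by (intro member_le_sum) (auto simp: cb0)
      moreover have "(\<Sum>n<N. rb n) \<ge> 0" by (intro sum_nonneg rb0)
      ultimately show False using nk cb[where k=k and n=n] unfolding T'_def by linarith
    qed
    moreover have "T \<le> \<bar>M n k\<bar>" using nk unfolding T'_def by linarith
    ultimately show ?thesis by blast
  qed
  define T where "T j K = 3 * 4 ^ j * (real j + 2 * C K + 1)" for j K
  have T0: "T j K > 0" for j K unfolding T_def using C0[of K] by simp
  let ?P = "\<lambda>j K n K'. K < K' \<and> \<bar>M n (K' - 1)\<bar> \<ge> T j K \<and> (\<forall>k\<ge>K. \<bar>M n k\<bar> \<le> 2 * \<bar>M n (K' - 1)\<bar>)"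
  have "\<exists>n\<ge>N. \<exists>K'>K. ?P j K n K'" for j K N
  proof -
    obtain n k0 where n: "n \<ge> N" "k0 \<ge> K" "\<bar>M n k0\<bar> \<ge> 2 * T j K" using big by blast
    define S where "S = (SUP k\<in>{K..}. \<bar>M n k\<bar>)"
    have bdd: "bdd_above ((\<lambda>k. \<bar>M n k\<bar>) ` {K..})" by (rule bdd_aboveI2[of _ _ "rb n"]) (rule rb)
    have up: "\<bar>M n k\<bar> \<le> S" if "k \<ge> K" for k
      unfolding S_def by (rule cSUP_upper[OF _ bdd]) (use that in auto)
    have "S / 2 < S" using up[OF n(2)] n(3) T0[of j K] by linarith
    then obtain k where k: "k \<ge> K" "S / 2 < \<bar>M n k\<bar>"
      unfolding S_def using less_cSUP_iff[OF _ bdd, of "S/2"] by (auto simp: S_def)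
    have "?P j K n (Suc k)"
    proof (intro conjI allI impI)
      show "K < Suc k" using k by simp
      show "\<bar>M n (Suc k - 1)\<bar> \<ge> T j K" using k up[OF n(2)] n(3) by simp
      fix k' assume "k' \<ge> K"
      hence "\<bar>M n k'\<bar> \<le> S" by (rule up)
      thus "\<bar>M n k'\<bar> \<le> 2 * \<bar>M n (Suc k - 1)\<bar>" using k(2) by simp
    qed
    thus ?thesis using n(1) by (intro exI[of _ n]) auto
  qed
  then obtain ns Ks where Ks: "strict_mono Ks" "Ks 0 = 0" and P: "\<And>j. ?P j (Ks j) (ns j) (Ks (Suc j))"
    using gliding[of ?P] by blast
  define s where "s j = Ks (Suc j) - 1" for j
  have KK: "Ks j < Ks (Suc j)" for j using P[of j] by blast
  have s_ge: "Ks j \<le> s j" and s_lt: "s j < Ks (Suc j)" for j using KK[of j] by (simp_all add: s_def)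
  have Ksmono: "Ks a \<le> Ks b" if "a \<le> b" for a b using Ks(1) that by (simp add: strict_mono_less_eq)
  have s: "strict_mono s"
  proof (rule strict_monoI_Suc)
    fix j show "s j < s (Suc j)" using s_lt[of j] s_ge[of "Suc j"] by simp
  qed
  have inj: "inj s" using s by (rule strict_mono_imp_inj_on)
  define x where "x k = (if k \<in> range s then sgn (M (ns (inv s k)) k) * (1/4) ^ (inv s k) else 0)" for k
  have xs: "x (s j) = sgn (M (ns j) (s j)) * (1/4) ^ j" for j
    by (simp add: x_def inv_f_f[OF inj])
  have "summable (\<lambda>k. \<bar>x k\<bar>)"
    by (rule sparse_l1[OF s, of _ "1/4"]) (auto simp: x_def xs abs_mult abs_sgn_eq inv_f_f[OF inj])
  note HH = H[OF this]
  obtain B where B: "\<And>n. \<bar>\<Sum>k. M n k * x k\<bar> \<le> B" using HH by blast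
  have sm: "\<And>n. summable (\<lambda>k. M n k * x k)" using HH by blast
  obtain j :: nat where j: "real j > B" using reals_Archimedean2 by blast
  let ?r = "M (ns j)"
  define g where "g i = ?r (s i) * x (s i)" for i
  have z: "\<And>k. k \<notin> range s \<Longrightarrow> ?r k * x k = 0" by (simp add: x_def)
  have "(\<lambda>i. ?r (s i) * x (s i)) sums (\<Sum>k. ?r k * x k)"
    by (rule sums_mono_reindex[OF s z, THEN iffD2]) (simp_all add: summable_sums[OF sm])
  moreover have "g = (\<lambda>i. ?r (s i) * x (s i))" by (simp add: g_def fun_eq_iff)
  ultimately have gs: "g sums (\<Sum>k. ?r k * x k)" by simp
  let ?m = "\<bar>?r (s j)\<bar>"
  have dec: "(\<Sum>k. ?r k * x k) = (\<Sum>i. g (i + Suc j)) + (\<Sum>i<j. g i) + g j"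
    using suminf_split_initial_segment[OF sums_summable[OF gs], of "Suc j"] sums_unique[OF gs] by simp
  have gj: "g j = ?m * (1/4) ^ j" by (simp add: g_def xs abs_sgn)
  have hd: "\<bar>\<Sum>i<j. g i\<bar> \<le> C (Ks j)"
  proof -
    have "\<bar>\<Sum>i<j. g i\<bar> \<le> (\<Sum>i<j. \<bar>?r (s i)\<bar>)"
    proof -
      have "\<bar>\<Sum>i<j. g i\<bar> \<le> (\<Sum>i<j. \<bar>g i\<bar>)" by (rule sum_abs)
      also have "\<dots> \<le> (\<Sum>i<j. \<bar>?r (s i)\<bar>)"
        by (intro sum_mono) (auto simp: g_def xs abs_mult abs_sgn_eq power_le_one intro!: mult_left_le)
      finally show ?thesis .
    qed
    also have "(\<Sum>i<j. \<bar>?r (s i)\<bar>) = (\<Sum>k\<in>s ` {..<j}. \<bar>?r k\<bar>)"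
      by (simp add: sum.reindex[OF inj_on_subset[OF inj]])
    also have "\<dots> \<le> (\<Sum>k<Ks j. \<bar>?r k\<bar>)"
    proof (rule sum_mono2)
      show "s ` {..<j} \<subseteq> {..<Ks j}"
      proof
        fix k assume "k \<in> s ` {..<j}"
        then obtain i where "i < j" "k = s i" by auto
        thus "k \<in> {..<Ks j}" using s_lt[of i] Ksmono[of "Suc i" j] by auto
      qed
    qed auto
    also have "\<dots> \<le> C (Ks j)" by (rule headC)
    finally show ?thesis .
  qed
  have tl: "\<bar>\<Sum>i. g (i + Suc j)\<bar> \<le> 2 / 3 * ?m * (1/4) ^ j"
  proof -
    have le: "\<bar>g (i + Suc j)\<bar> \<le> 2 * ?m * (1/4) ^ (Suc j) * (1/4) ^ i" for i
    proof -
      have "s (i + Suc j) \<ge> Ks j" using s_ge[of "i + Suc j"] Ksmono[of j "i + Suc j"] by simp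
      hence "\<bar>?r (s (i + Suc j))\<bar> \<le> 2 * ?m" using P[of j] by (simp add: s_def)
      hence "\<bar>?r (s (i + Suc j))\<bar> * (1/4) ^ (i + Suc j) \<le> 2 * ?m * (1/4) ^ (i + Suc j)"
        by (intro mult_right_mono) auto
      thus ?thesis by (simp add: g_def xs abs_mult abs_sgn_eq power_add mult_ac)
    qed
    have sg: "summable (\<lambda>i. 2 * ?m * (1/4) ^ (Suc j) * (1/4::real) ^ i)"
      by (intro summable_mult summable_geometric) simp
    have sa: "summable (\<lambda>i. \<bar>g (i + Suc j)\<bar>)"
      by (rule summable_comparison_test'[OF sg]) (use le in simp)
    have "\<bar>\<Sum>i. g (i + Suc j)\<bar> \<le> (\<Sum>i. \<bar>g (i + Suc j)\<bar>)" by (rule summable_rabs[OF sa])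
    also have "\<dots> \<le> (\<Sum>i. 2 * ?m * (1/4) ^ (Suc j) * (1/4::real) ^ i)" by (rule suminf_le[OF le sa sg])
    also have "\<dots> = 2 * ?m * (1/4) ^ (Suc j) * (4/3)"
      using suminf_mult[of "\<lambda>i. (1/4::real) ^ i" "2 * ?m * (1/4) ^ (Suc j)"] suminf_geometric[of "1/4::real"]
        summable_geometric[of "1/4::real"] by simp
    also have "\<dots> = 2 / 3 * ?m * (1/4) ^ j" by simp
    finally show ?thesis .
  qed
  have mbig: "?m \<ge> 3 * 4 ^ j * (real j + 2 * C (Ks j) + 1)" using P[of j] by (simp add: s_def T_def)
  have "?m * (1/4) ^ j \<ge> 3 * (real j + 2 * C (Ks j) + 1)"
  proof -
    have "?m * (1/4) ^ j \<ge> 3 * 4 ^ j * (real j + 2 * C (Ks j) + 1) * (1/4) ^ j"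
      by (intro mult_right_mono mbig) simp
    moreover have "(4::real) ^ j * (1/4) ^ j = 1" by (simp add: power_one_over)
    moreover have "3 * 4 ^ j * (real j + 2 * C (Ks j) + 1) * (1/4) ^ j
        = 3 * (real j + 2 * C (Ks j) + 1) * ((4::real) ^ j * (1/4) ^ j)" by (simp only: mult_ac)
    ultimately show ?thesis by simp
  qed
  hence "\<bar>\<Sum>k. ?r k * x k\<bar> \<ge> real j" using dec hd tl gj by (simp add: abs_le_iff) linarith
  thus False using B[of "ns j"] j by simp
qed


lemma suf_l1:
  fixes M :: "nat \<Rightarrow> nat \<Rightarrow> real"
  assumes bnd: "\<And>n k. \<bar>M n k\<bar> \<le> B" and cols: "\<And>k. (\<lambda>n. M n k) \<longlonglongrightarrow> a k"
    and x: "summable (\<lambda>k. \<bar>x k\<bar>)"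
  shows "(\<forall>n. summable (\<lambda>k. M n k * x k)) \<and> (\<lambda>n. \<Sum>k. M n k * x k) \<longlonglongrightarrow> (\<Sum>k. a k * x k)"
proof
  have le: "norm (M n k * x k) \<le> B * \<bar>x k\<bar>" for n k
    using absmul[OF bnd[of n k], of "x k"] by (simp add: abs_mult mult.commute)
  have sB: "summable (\<lambda>k. B * \<bar>x k\<bar>)" using x by (rule summable_mult)
  show "\<forall>n. summable (\<lambda>k. M n k * x k)"
  proof
    fix n show "summable (\<lambda>k. M n k * x k)" by (rule summable_comparison_test'[OF sB]) (rule le)
  qed
  have "eventually (\<lambda>n. summable (\<lambda>k. norm (M n k * x k))) sequentially \<and>
           summable (\<lambda>k. norm (a k * x k)) \<and>
           ((\<lambda>n. suminf (\<lambda>k. M n k * x k)) \<longlongrightarrow> suminf (\<lambda>k. a k * x k)) sequentially"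
  proof (rule tannerys_theorem[where M="\<lambda>k. B * \<bar>x k\<bar>"])
    show "\<And>k. ((\<lambda>n. M n k * x k) \<longlongrightarrow> a k * x k) sequentially"
      by (intro tendsto_mult cols tendsto_const)
    show "\<forall>\<^sub>F (k, n) in at_top \<times>\<^sub>F sequentially. norm (M n k * x k) \<le> B * \<bar>x k\<bar>"
      by (rule always_eventually) (auto simp: le[unfolded real_norm_def])
  qed (use sB in auto)
  thus "(\<lambda>n. \<Sum>k. M n k * x k) \<longlonglongrightarrow> (\<Sum>k. a k * x k)" by blast
qed

lemma col_limit_l1:
  fixes M :: "nat \<Rightarrow> nat \<Rightarrow> real"
  assumes rows: "\<And>n. summable (\<lambda>k. \<bar>M n k\<bar>)"
    and bound: "\<And>n. (\<Sum>k. \<bar>M n k\<bar>) \<le> B"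
    and cols: "\<And>k. (\<lambda>n. M n k) \<longlonglongrightarrow> a k"
  shows "summable (\<lambda>k. \<bar>a k\<bar>)"
proof -
  have "(\<Sum>k<K. \<bar>a k\<bar>) \<le> B" for K
  proof (rule LIMSEQ_le_const2)
    show "(\<lambda>n. \<Sum>k<K. \<bar>M n k\<bar>) \<longlonglongrightarrow> (\<Sum>k<K. \<bar>a k\<bar>)"
      by (intro tendsto_sum tendsto_rabs cols)
    show "\<exists>N. \<forall>n\<ge>N. (\<Sum>k<K. \<bar>M n k\<bar>) \<le> B"
      using sum_le_suminf[OF rows, of "{..<K}"] bound by (meson abs_ge_zero finite_lessThan order_trans)
  qed
  thus ?thesis by (intro summableI_nonneg_bounded) auto
qed

lemma summable_absdiff:
  fixes f g :: "nat \<Rightarrow> real"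
  assumes "summable (\<lambda>k. \<bar>f k\<bar>)" "summable (\<lambda>k. \<bar>g k\<bar>)"
  shows "summable (\<lambda>k. \<bar>f k - g k\<bar>)" and "(\<Sum>k. \<bar>f k - g k\<bar>) \<le> (\<Sum>k. \<bar>f k\<bar>) + (\<Sum>k. \<bar>g k\<bar>)"
proof -
  have s: "summable (\<lambda>k. \<bar>f k\<bar> + \<bar>g k\<bar>)" by (intro summable_add assms)
  show 1: "summable (\<lambda>k. \<bar>f k - g k\<bar>)"
    by (rule summable_comparison_test'[OF s]) auto
  have "(\<Sum>k. \<bar>f k - g k\<bar>) \<le> (\<Sum>k. \<bar>f k\<bar> + \<bar>g k\<bar>)" by (rule suminf_le[OF _ 1 s]) auto
  thus "(\<Sum>k. \<bar>f k - g k\<bar>) \<le> (\<Sum>k. \<bar>f k\<bar>) + (\<Sum>k. \<bar>g k\<bar>)" using suminf_add[OF assms] by simp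
qed

lemma suminf_diff_mult:
  fixes f g x :: "nat \<Rightarrow> real"
  assumes "summable (\<lambda>k. \<bar>f k\<bar>)" "summable (\<lambda>k. \<bar>g k\<bar>)" "\<forall>k. \<bar>x k\<bar> \<le> X"
  shows "(\<Sum>k. (f k - g k) * x k) = (\<Sum>k. f k * x k) - (\<Sum>k. g k * x k)"
  using suminf_diff[OF summable_mult_bounded[OF assms(1,3)] summable_mult_bounded[OF assms(2,3)]]
  by (simp add: left_diff_distrib)

lemma bounded_seq: "x \<longlonglongrightarrow> (l::real) \<Longrightarrow> \<exists>X. \<forall>k. \<bar>x k\<bar> \<le> X"
proof -
  assume "x \<longlonglongrightarrow> l"
  hence "Bseq x" by (intro convergent_imp_Bseq convergentI)
  then obtain K where "\<forall>n. norm (x n) \<le> K" by (auto elim: BseqE)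
  thus ?thesis by auto
qed

lemma null_c0:
  fixes D :: "nat \<Rightarrow> nat \<Rightarrow> real"
  assumes rows: "\<And>n. summable (\<lambda>k. \<bar>D n k\<bar>)"
    and bound: "\<And>n. (\<Sum>k. \<bar>D n k\<bar>) \<le> B"
    and cols: "\<And>k. (\<lambda>n. D n k) \<longlonglongrightarrow> 0"
    and x: "x \<longlonglongrightarrow> 0"
  shows "(\<lambda>n. \<Sum>k. D n k * x k) \<longlonglongrightarrow> 0"
proof (rule LIMSEQ_I)
  fix e :: real assume e: "e > 0"
  have B0: "B \<ge> 0" using bound[of 0] suminf_nonneg[OF rows[of 0]] by simp
  define h where "h = e / (2 * (B + 1))"
  have h: "h > 0" using e B0 by (simp add: h_def)
  obtain K where K: "\<forall>k\<ge>K. norm (x k - 0) < h" using LIMSEQ_D[OF x h] by blast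
  have "(\<lambda>n. \<Sum>k<K. D n k * x k) \<longlonglongrightarrow> (\<Sum>k<K. 0 * x k)"
    by (intro tendsto_sum tendsto_mult cols tendsto_const)
  hence "(\<lambda>n. \<Sum>k<K. D n k * x k) \<longlonglongrightarrow> 0" by simp
  moreover have e2: "e / 2 > 0" using e by simp
  ultimately obtain N where N: "\<forall>n\<ge>N. norm ((\<Sum>k<K. D n k * x k) - 0) < e / 2"
    using LIMSEQ_D by blast
  show "\<exists>N. \<forall>n\<ge>N. norm ((\<Sum>k. D n k * x k) - 0) < e"
  proof (intro exI allI impI)
    fix n assume n: "n \<ge> N"
    obtain X where X: "\<forall>k. \<bar>x k\<bar> \<le> X" using bounded_seq[OF x] by blast
    have sm: "summable (\<lambda>k. D n k * x k)" by (rule summable_mult_bounded[OF rows X])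
    have dec: "(\<Sum>k. D n k * x k) = (\<Sum>i. D n (i + K) * x (i + K)) + (\<Sum>k<K. D n k * x k)"
      by (rule suminf_split_initial_segment[OF sm])
    have rs: "summable (\<lambda>i. \<bar>D n (i + K)\<bar>)" using rows[of n] by (subst summable_iff_shift)
    have xh: "\<forall>i. \<bar>x (i + K)\<bar> \<le> h" using K by (auto intro: less_imp_le)
    have "\<bar>\<Sum>i. D n (i + 0 + K) * x (i + 0 + K)\<bar> \<le> h * (\<Sum>i. \<bar>D n (i + 0 + K)\<bar>)"
      using tail_bound[of "\<lambda>i. D n (i + K)" "\<lambda>i. x (i + K)" h 0] rs xh by simp
    hence tl: "\<bar>\<Sum>i. D n (i + K) * x (i + K)\<bar> \<le> h * (\<Sum>i. \<bar>D n (i + K)\<bar>)" by simp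
    have "(\<Sum>k. \<bar>D n k\<bar>) = (\<Sum>i. \<bar>D n (i + K)\<bar>) + (\<Sum>k<K. \<bar>D n k\<bar>)"
      by (rule suminf_split_initial_segment[OF rows])
    moreover have "(\<Sum>k<K. \<bar>D n k\<bar>) \<ge> 0" by (rule sum_nonneg) simp
    ultimately have "(\<Sum>i. \<bar>D n (i + K)\<bar>) \<le> B" using bound[of n] by linarith
    hence "h * (\<Sum>i. \<bar>D n (i + K)\<bar>) \<le> h * B" using h by (intro mult_left_mono) auto
    also have "h * B < e / 2" using e B0 by (simp add: h_def field_simps)
    finally have "\<bar>\<Sum>i. D n (i + K) * x (i + K)\<bar> < e / 2" using tl by linarith
    moreover have "\<bar>\<Sum>k<K. D n k * x k\<bar> < e / 2" using N n by simp
    ultimately show "norm ((\<Sum>k. D n k * x k) - 0) < e" using dec by simp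
  qed
qed

lemma suf_c0:
  fixes M :: "nat \<Rightarrow> nat \<Rightarrow> real"
  assumes rows: "\<And>n. summable (\<lambda>k. \<bar>M n k\<bar>)"
    and bound: "\<And>n. (\<Sum>k. \<bar>M n k\<bar>) \<le> B"
    and cols: "\<And>k. (\<lambda>n. M n k) \<longlonglongrightarrow> a k"
    and x: "x \<longlonglongrightarrow> 0"
  shows "(\<forall>n. summable (\<lambda>k. M n k * x k)) \<and> (\<lambda>n. \<Sum>k. M n k * x k) \<longlonglongrightarrow> (\<Sum>k. a k * x k)"
proof
  obtain X where X: "\<forall>k. \<bar>x k\<bar> \<le> X" using bounded_seq[OF x] by blast
  show "\<forall>n. summable (\<lambda>k. M n k * x k)" using summable_mult_bounded[OF rows X] by blast
  have sa: "summable (\<lambda>k. \<bar>a k\<bar>)" by (rule col_limit_l1[OF rows bound cols])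
  define D where "D n k = M n k - a k" for n k
  have rowsD: "summable (\<lambda>k. \<bar>D n k\<bar>)" for n unfolding D_def by (rule summable_absdiff(1)[OF rows sa])
  have boundD: "(\<Sum>k. \<bar>D n k\<bar>) \<le> B + (\<Sum>k. \<bar>a k\<bar>)" for n
    unfolding D_def using summable_absdiff(2)[OF rows sa, of n] bound[of n] by linarith
  have colsD: "(\<lambda>n. D n k) \<longlonglongrightarrow> 0" for k
    unfolding D_def using tendsto_diff[OF cols[of k] tendsto_const[of "a k"]] by simp
  have "(\<lambda>n. \<Sum>k. D n k * x k) \<longlonglongrightarrow> 0" by (rule null_c0[OF rowsD boundD colsD x])
  moreover have "(\<Sum>k. D n k * x k) = (\<Sum>k. M n k * x k) - (\<Sum>k. a k * x k)" for n
    unfolding D_def by (rule suminf_diff_mult[OF rows sa X])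
  ultimately have "(\<lambda>n. (\<Sum>k. M n k * x k) - (\<Sum>k. a k * x k)) \<longlonglongrightarrow> 0" by simp
  from tendsto_add[OF this tendsto_const[of "\<Sum>k. a k * x k"]]
  show "(\<lambda>n. \<Sum>k. M n k * x k) \<longlonglongrightarrow> (\<Sum>k. a k * x k)" by simp
qed

lemma suf_c:
  fixes M :: "nat \<Rightarrow> nat \<Rightarrow> real"
  assumes rows: "\<And>n. summable (\<lambda>k. \<bar>M n k\<bar>)"
    and bound: "\<And>n. (\<Sum>k. \<bar>M n k\<bar>) \<le> B"
    and cols: "\<And>k. (\<lambda>n. M n k) \<longlonglongrightarrow> a k"
    and rs: "(\<lambda>n. \<Sum>k. M n k) \<longlonglongrightarrow> s"
    and x: "x \<longlonglongrightarrow> l"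
  shows "(\<forall>n. summable (\<lambda>k. M n k * x k)) \<and> (\<lambda>n. \<Sum>k. M n k * x k) \<longlonglongrightarrow> l * s + (\<Sum>k. a k * (x k - l))"
proof
  obtain X where X: "\<forall>k. \<bar>x k\<bar> \<le> X" using bounded_seq[OF x] by blast
  show "\<forall>n. summable (\<lambda>k. M n k * x k)" using summable_mult_bounded[OF rows X] by blast
  have x0: "(\<lambda>k. x k - l) \<longlonglongrightarrow> 0" using tendsto_diff[OF x tendsto_const[of l]] by simp
  note S = suf_c0[OF rows bound cols x0]
  have eq: "(\<Sum>k. M n k * x k) = l * (\<Sum>k. M n k) + (\<Sum>k. M n k * (x k - l))" for n
  proof -
    have s1: "summable (\<lambda>k. M n k)" using rows[of n] by (rule summable_rabs_cancel)
    have s2: "summable (\<lambda>k. M n k * (x k - l))" using S by blast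
    have "(\<Sum>k. M n k * x k) = (\<Sum>k. l * M n k + M n k * (x k - l))" by (simp add: algebra_simps)
    also have "\<dots> = (\<Sum>k. l * M n k) + (\<Sum>k. M n k * (x k - l))"
      by (rule suminf_add[symmetric]) (intro summable_mult s1, rule s2)
    also have "(\<Sum>k. l * M n k) = l * (\<Sum>k. M n k)" by (rule suminf_mult[OF s1])
    finally show ?thesis .
  qed
  show "(\<lambda>n. \<Sum>k. M n k * x k) \<longlonglongrightarrow> l * s + (\<Sum>k. a k * (x k - l))"
    unfolding eq by (intro tendsto_add tendsto_mult tendsto_const rs) (use S in blast)
qed

lemma suf_linf:
  fixes M :: "nat \<Rightarrow> nat \<Rightarrow> real"
  assumes rows: "\<And>n. summable (\<lambda>k. \<bar>M n k\<bar>)"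
    and cols: "\<And>k. (\<lambda>n. M n k) \<longlonglongrightarrow> a k"
    and sa: "summable (\<lambda>k. \<bar>a k\<bar>)"
    and nrm: "(\<lambda>n. \<Sum>k. \<bar>M n k\<bar>) \<longlonglongrightarrow> (\<Sum>k. \<bar>a k\<bar>)"
    and X: "\<forall>k. \<bar>x k\<bar> \<le> X"
  shows "(\<forall>n. summable (\<lambda>k. M n k * x k)) \<and> (\<lambda>n. \<Sum>k. M n k * x k) \<longlonglongrightarrow> (\<Sum>k. a k * x k)"
proof
  show "\<forall>n. summable (\<lambda>k. M n k * x k)" using summable_mult_bounded[OF rows X] by blast
  define D where "D n k = M n k - a k" for n k
  have rowsD: "summable (\<lambda>k. \<bar>D n k\<bar>)" for n unfolding D_def by (rule summable_absdiff(1)[OF rows sa])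
  have colsD: "(\<lambda>n. D n k) \<longlonglongrightarrow> 0" for k
    unfolding D_def using tendsto_diff[OF cols[of k] tendsto_const[of "a k"]] by simp
  have Dn: "(\<lambda>n. \<Sum>k. \<bar>D n k\<bar>) \<longlonglongrightarrow> 0"
  proof (rule LIMSEQ_I)
    fix e :: real assume e: "e > 0"
    obtain K where K: "\<forall>m\<ge>K. norm (\<Sum>i. \<bar>a (i + m)\<bar>) < e / 4"
      using suminf_exist_split[of "e/4" "\<lambda>k. \<bar>a k\<bar>"] e sa by auto
    let ?ta = "\<Sum>i. \<bar>a (i + K)\<bar>"
    have ta: "?ta < e / 4" using K by auto
    have ra: "summable (\<lambda>i. \<bar>a (i + K)\<bar>)" using sa by (subst summable_iff_shift)
    have ta0: "?ta \<ge> 0" by (rule suminf_nonneg[OF ra]) simp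
    define u where "u n = (\<Sum>k<K. \<bar>D n k\<bar>) + ((\<Sum>k. \<bar>M n k\<bar>) - (\<Sum>k<K. \<bar>M n k\<bar>)) + ?ta" for n
    have "u \<longlonglongrightarrow> (\<Sum>k<K. 0) + ((\<Sum>k. \<bar>a k\<bar>) - (\<Sum>k<K. \<bar>a k\<bar>)) + ?ta"
      unfolding u_def
      by (intro tendsto_add tendsto_diff nrm tendsto_sum tendsto_rabs_zero colsD tendsto_rabs cols tendsto_const)
    moreover have "(\<Sum>k. \<bar>a k\<bar>) - (\<Sum>k<K. \<bar>a k\<bar>) = ?ta"
      using suminf_split_initial_segment[OF sa, of K] by simp
    ultimately have "u \<longlonglongrightarrow> 2 * ?ta" by simp
    moreover have "2 * ?ta < e" using ta ta0 by linarith
    ultimately have ev: "eventually (\<lambda>n. u n < e) sequentially" by (rule order_tendstoD)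
    then obtain N where N: "\<forall>n\<ge>N. u n < e" by (auto simp: eventually_sequentially)
    show "\<exists>N. \<forall>n\<ge>N. norm ((\<Sum>k. \<bar>D n k\<bar>) - 0) < e"
    proof (intro exI allI impI)
      fix n assume n: "n \<ge> N"
      have rM: "summable (\<lambda>i. \<bar>M n (i + K)\<bar>)" using rows[of n] by (subst summable_iff_shift)
      have "(\<Sum>k. \<bar>D n k\<bar>) = (\<Sum>i. \<bar>D n (i + K)\<bar>) + (\<Sum>k<K. \<bar>D n k\<bar>)"
        by (rule suminf_split_initial_segment[OF rowsD])
      moreover have "(\<Sum>i. \<bar>D n (i + K)\<bar>) \<le> (\<Sum>i. \<bar>M n (i + K)\<bar>) + ?ta"
        unfolding D_def by (rule summable_absdiff(2)[OF rM ra])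
      moreover have "(\<Sum>k. \<bar>M n k\<bar>) = (\<Sum>i. \<bar>M n (i + K)\<bar>) + (\<Sum>k<K. \<bar>M n k\<bar>)"
        by (rule suminf_split_initial_segment[OF rows])
      ultimately have "(\<Sum>k. \<bar>D n k\<bar>) \<le> u n" unfolding u_def by linarith
      moreover have "(\<Sum>k. \<bar>D n k\<bar>) \<ge> 0" by (rule suminf_nonneg[OF rowsD]) simp
      ultimately show "norm ((\<Sum>k. \<bar>D n k\<bar>) - 0) < e" using N n by fastforce
    qed
  qed
  have X0: "X \<ge> 0" using X[rule_format, of 0] by simp
  have "(\<lambda>n. \<Sum>k. D n k * x k) \<longlonglongrightarrow> 0"
  proof (rule Lim_null_comparison[where g="\<lambda>n. X * (\<Sum>k. \<bar>D n k\<bar>)"])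
    show "\<forall>\<^sub>F n in sequentially. norm (\<Sum>k. D n k * x k) \<le> X * (\<Sum>k. \<bar>D n k\<bar>)"
    proof (rule always_eventually, rule allI)
      fix n
      show "norm (\<Sum>k. D n k * x k) \<le> X * (\<Sum>k. \<bar>D n k\<bar>)"
        using tail_bound[OF rowsD X, of n 0] by simp
    qed
    show "(\<lambda>n. X * (\<Sum>k. \<bar>D n k\<bar>)) \<longlonglongrightarrow> 0" using tendsto_mult[OF tendsto_const[of X] Dn] by simp
  qed
  moreover have "(\<Sum>k. D n k * x k) = (\<Sum>k. M n k * x k) - (\<Sum>k. a k * x k)" for n
    unfolding D_def by (rule suminf_diff_mult[OF rows sa X])
  ultimately have "(\<lambda>n. (\<Sum>k. M n k * x k) - (\<Sum>k. a k * x k)) \<longlonglongrightarrow> 0" by simp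
  from tendsto_add[OF this tendsto_const[of "\<Sum>k. a k * x k"]]
  show "(\<lambda>n. \<Sum>k. M n k * x k) \<longlonglongrightarrow> (\<Sum>k. a k * x k)" by simp
qed


lemma linf_iff: "x \<in> linf_space \<longleftrightarrow> (\<exists>B. \<forall>k. \<bar>x k\<bar> \<le> B)"
  unfolding linf_space_def bounded_iff by auto

lemma conv_bdd: "convergent (x :: nat \<Rightarrow> real) \<Longrightarrow> \<exists>B. \<forall>k. \<bar>x k\<bar> \<le> B"
  using bounded_seq by (auto simp: convergent_def)

lemma c0_sub_c: "c0_space \<subseteq> c_space" by (auto simp: c0_space_def c_space_def convergent_def)
lemma c_sub_linf: "c_space \<subseteq> linf_space" by (auto simp: c_space_def linf_iff dest: conv_bdd)
lemma c0_sub_linf: "c0_space \<subseteq> linf_space" using c0_sub_c c_sub_linf by blast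

lemma mc_mono: "X' \<subseteq> X \<Longrightarrow> Y \<subseteq> Y' \<Longrightarrow> matrix_class X Y M \<Longrightarrow> matrix_class X' Y' M"
  unfolding matrix_class_def by blast

definition ev :: "nat \<Rightarrow> nat \<Rightarrow> real" where "ev k j = (if j = k then 1 else 0)"

lemma ev_sum: "(\<Sum>j. f j * ev k j) = f (k::nat)"
proof -
  have "(\<lambda>j. f j * ev k j) = (\<lambda>j. if j = k then f j else 0)" by (auto simp: ev_def fun_eq_iff)
  thus ?thesis using sums_single[of k f] sums_unique by metis
qed

lemma ev_summable: "summable (\<lambda>j. f j * ev k j)"
proof -
  have "(\<lambda>j. f j * ev k j) = (\<lambda>j. if j = k then f j else 0)" by (auto simp: ev_def fun_eq_iff)
  thus ?thesis using sums_single[of k f] sums_summable by metis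
qed

lemma ev_in: "ev k \<in> l1_space" "ev k \<in> c0_space" "ev k \<in> c_space" "ev k \<in> linf_space"
proof -
  have "(\<lambda>j. \<bar>ev k j\<bar>) = (\<lambda>j. 1 * ev k j)" by (auto simp: ev_def fun_eq_iff)
  hence "summable (\<lambda>j. \<bar>ev k j\<bar>)" using ev_summable[of "\<lambda>_. 1" k] by simp
  thus "ev k \<in> l1_space" by (simp add: l1_space_def)
  have "ev k \<longlonglongrightarrow> 0"
    by (rule LIMSEQ_offset[of _ "Suc k"]) (simp add: ev_def)
  thus "ev k \<in> c0_space" by (simp add: c0_space_def)
  thus "ev k \<in> c_space" "ev k \<in> linf_space" using c0_sub_c c0_sub_linf by blast+
qed

lemma mc_col: "matrix_class X Y M \<Longrightarrow> ev k \<in> X \<Longrightarrow> (\<lambda>n. M n k) \<in> Y"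
  unfolding matrix_class_def using ev_sum[of "M _" k] by auto

lemma one_in: "(\<lambda>_. 1::real) \<in> c_space" by (simp add: c_space_def convergent_const)

lemma mc_rowsum: "matrix_class c_space Y M \<Longrightarrow> (\<lambda>n. \<Sum>k. M n k) \<in> Y"
  unfolding matrix_class_def using one_in by fastforce

lemma nec_rows: "matrix_class c0_space Y M \<Longrightarrow> summable (\<lambda>k. \<bar>M n k\<bar>)"
  by (rule row_l1_c0) (auto simp: matrix_class_def c0_space_def)

lemma nec_bound:
  assumes "matrix_class c0_space Y M" "Y \<subseteq> linf_space"
  shows "\<exists>B. \<forall>n. summable (\<lambda>k. \<bar>M n k\<bar>) \<and> (\<Sum>k. \<bar>M n k\<bar>) \<le> B"
proof -
  have "\<exists>B. \<forall>n. (\<Sum>k. \<bar>M n k\<bar>) \<le> B"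
  proof (rule unif_bound_c0)
    show "summable (\<lambda>k. \<bar>M n k\<bar>)" for n by (rule nec_rows[OF assms(1)])
    show "\<exists>B. \<forall>n. \<bar>M n k\<bar> \<le> B" for k
    proof -
    have "(\<lambda>n. M n k) \<in> linf_space" using mc_col[OF assms(1) ev_in(2)[of k]] assms(2) by blast
    thus ?thesis by (simp add: linf_iff)
  qed
    fix x :: "nat \<Rightarrow> real" assume "x \<longlonglongrightarrow> 0"
    hence "(\<lambda>n. \<Sum>k. M n k * x k) \<in> Y" using assms(1) by (auto simp: matrix_class_def c0_space_def)
    thus "\<exists>B. \<forall>n. \<bar>\<Sum>k. M n k * x k\<bar> \<le> B" using assms(2) by (auto simp: linf_iff)
  qed
  thus ?thesis using nec_rows[OF assms(1)] by blast
qed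

lemma nec_bound_l1:
  assumes "matrix_class l1_space Y M" "Y \<subseteq> linf_space"
  shows "\<exists>B. \<forall>n k. \<bar>M n k\<bar> \<le> B"
proof (rule unif_bound_l1)
  show "\<exists>B. \<forall>k. \<bar>M n k\<bar> \<le> B" for n
    by (rule row_bdd_l1) (use assms(1) in \<open>auto simp: matrix_class_def l1_space_def\<close>)
  show "\<exists>B. \<forall>n. \<bar>M n k\<bar> \<le> B" for k
  proof -
    have "(\<lambda>n. M n k) \<in> linf_space" using mc_col[OF assms(1) ev_in(1)[of k]] assms(2) by blast
    thus ?thesis by (simp add: linf_iff)
  qed
  fix x :: "nat \<Rightarrow> real" assume "summable (\<lambda>k. \<bar>x k\<bar>)"
  hence "(\<forall>n. summable (\<lambda>k. M n k * x k)) \<and> (\<lambda>n. \<Sum>k. M n k * x k) \<in> Y"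
    using assms(1) by (auto simp: matrix_class_def l1_space_def)
  thus "(\<forall>n. summable (\<lambda>k. M n k * x k)) \<and> (\<exists>B. \<forall>n. \<bar>\<Sum>k. M n k * x k\<bar> \<le> B)"
    using assms(2) by (auto simp: linf_iff)
qed


lemma c0_lim: "x \<in> c0_space \<longleftrightarrow> x \<longlonglongrightarrow> 0" by (simp add: c0_space_def)
lemma c_lim: "x \<in> c_space \<longleftrightarrow> (\<exists>l. x \<longlonglongrightarrow> l)" by (simp add: c_space_def convergent_def)

lemma term_le_suminf: "summable (\<lambda>k. \<bar>f k\<bar>) \<Longrightarrow> \<bar>f k\<bar> \<le> (\<Sum>k. \<bar>f k\<bar>)" for f :: "nat \<Rightarrow> real"
  using sum_le_suminf[of "\<lambda>k. \<bar>f k\<bar>" "{k}"] by simp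

lemma part1:
  "matrix_class linf_space c0_space M \<longleftrightarrow>
     (\<forall>n. summable (\<lambda>k. \<bar>M n k\<bar>)) \<and> (\<lambda>n. \<Sum>k. \<bar>M n k\<bar>) \<longlonglongrightarrow> 0"
proof
  assume A: "matrix_class linf_space c0_space M"
  have A0: "matrix_class c0_space c0_space M" by (rule mc_mono[OF c0_sub_linf _ A]) simp
  have rows: "\<And>n. summable (\<lambda>k. \<bar>M n k\<bar>)" by (rule nec_rows[OF A0])
  obtain B where B: "\<And>n. (\<Sum>k. \<bar>M n k\<bar>) \<le> B" using nec_bound[OF A0 c0_sub_linf] by blast
  have cols: "(\<lambda>n. M n k) \<longlonglongrightarrow> 0" for k using mc_col[OF A ev_in(4)] by (simp add: c0_lim)
  have "summable (\<lambda>k. \<bar>0::real\<bar>) \<and> (\<lambda>n. \<Sum>k. \<bar>M n k - 0\<bar>) \<longlonglongrightarrow> 0"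
  proof (rule schur[OF rows B cols])
    fix x :: "nat \<Rightarrow> real" assume "\<forall>k. \<bar>x k\<bar> \<le> 1"
    hence "x \<in> linf_space" by (auto simp: linf_iff)
    hence "(\<lambda>n. \<Sum>k. M n k * x k) \<longlonglongrightarrow> 0" using A by (auto simp: matrix_class_def c0_lim)
    thus "convergent (\<lambda>n. \<Sum>k. M n k * x k)" by (auto simp: convergent_def)
  qed
  thus "(\<forall>n. summable (\<lambda>k. \<bar>M n k\<bar>)) \<and> (\<lambda>n. \<Sum>k. \<bar>M n k\<bar>) \<longlonglongrightarrow> 0" using rows by simp
next
  assume R: "(\<forall>n. summable (\<lambda>k. \<bar>M n k\<bar>)) \<and> (\<lambda>n. \<Sum>k. \<bar>M n k\<bar>) \<longlonglongrightarrow> 0"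
  hence rows: "\<And>n. summable (\<lambda>k. \<bar>M n k\<bar>)" and nrm: "(\<lambda>n. \<Sum>k. \<bar>M n k\<bar>) \<longlonglongrightarrow> 0" by auto
  have cols: "(\<lambda>n. M n k) \<longlonglongrightarrow> 0" for k
  proof (rule Lim_null_comparison[OF _ nrm])
    show "\<forall>\<^sub>F n in sequentially. norm (M n k) \<le> (\<Sum>k. \<bar>M n k\<bar>)"
      by (rule always_eventually) (auto intro!: term_le_suminf rows)
  qed
  show "matrix_class linf_space c0_space M"
    unfolding matrix_class_def
  proof
    fix x assume "x \<in> linf_space"
    then obtain X where X: "\<forall>k. \<bar>x k\<bar> \<le> X" by (auto simp: linf_iff)
    have "(\<forall>n. summable (\<lambda>k. M n k * x k)) \<and> (\<lambda>n. \<Sum>k. M n k * x k) \<longlonglongrightarrow> (\<Sum>k. 0 * x k)"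
      by (rule suf_linf[OF rows cols _ _ X]) (use nrm in auto)
    thus "(\<forall>n. summable (\<lambda>k. M n k * x k)) \<and> (\<lambda>n. \<Sum>k. M n k * x k) \<in> c0_space"
      by (simp add: c0_lim)
  qed
qed

lemma part2:
  "matrix_class c_space c0_space M \<longleftrightarrow>
     (\<exists>B. \<forall>n. summable (\<lambda>k. \<bar>M n k\<bar>) \<and> (\<Sum>k. \<bar>M n k\<bar>) \<le> B)
     \<and> (\<forall>k. (\<lambda>n. M n k) \<longlonglongrightarrow> 0)
     \<and> (\<lambda>n. \<Sum>k. M n k) \<longlonglongrightarrow> 0"
proof
  assume A: "matrix_class c_space c0_space M"
  have A0: "matrix_class c0_space c0_space M" by (rule mc_mono[OF c0_sub_c _ A]) simp
  show "(\<exists>B. \<forall>n. summable (\<lambda>k. \<bar>M n k\<bar>) \<and> (\<Sum>k. \<bar>M n k\<bar>) \<le> B)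
     \<and> (\<forall>k. (\<lambda>n. M n k) \<longlonglongrightarrow> 0) \<and> (\<lambda>n. \<Sum>k. M n k) \<longlonglongrightarrow> 0"
    using nec_bound[OF A0 c0_sub_linf] mc_col[OF A ev_in(3)] mc_rowsum[OF A] by (simp add: c0_lim)
next
  assume R: "(\<exists>B. \<forall>n. summable (\<lambda>k. \<bar>M n k\<bar>) \<and> (\<Sum>k. \<bar>M n k\<bar>) \<le> B)
     \<and> (\<forall>k. (\<lambda>n. M n k) \<longlonglongrightarrow> 0) \<and> (\<lambda>n. \<Sum>k. M n k) \<longlonglongrightarrow> 0"
  then obtain B where rows: "\<And>n. summable (\<lambda>k. \<bar>M n k\<bar>)" and B: "\<And>n. (\<Sum>k. \<bar>M n k\<bar>) \<le> B"
    and cols: "\<And>k. (\<lambda>n. M n k) \<longlonglongrightarrow> 0" and rs: "(\<lambda>n. \<Sum>k. M n k) \<longlonglongrightarrow> 0" by blast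
  show "matrix_class c_space c0_space M"
    unfolding matrix_class_def
  proof
    fix x assume "x \<in> c_space"
    then obtain l where x: "x \<longlonglongrightarrow> l" by (auto simp: c_lim)
    from suf_c[OF rows B cols rs x]
    show "(\<forall>n. summable (\<lambda>k. M n k * x k)) \<and> (\<lambda>n. \<Sum>k. M n k * x k) \<in> c0_space"
      by (simp add: c0_lim)
  qed
qed

lemma part3:
  "matrix_class c0_space c0_space M \<longleftrightarrow>
     (\<exists>B. \<forall>n. summable (\<lambda>k. \<bar>M n k\<bar>) \<and> (\<Sum>k. \<bar>M n k\<bar>) \<le> B)
     \<and> (\<forall>k. (\<lambda>n. M n k) \<longlonglongrightarrow> 0)"
proof
  assume A: "matrix_class c0_space c0_space M"
  show "(\<exists>B. \<forall>n. summable (\<lambda>k. \<bar>M n k\<bar>) \<and> (\<Sum>k. \<bar>M n k\<bar>) \<le> B)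
     \<and> (\<forall>k. (\<lambda>n. M n k) \<longlonglongrightarrow> 0)"
    using nec_bound[OF A c0_sub_linf] mc_col[OF A ev_in(2)] by (simp add: c0_lim)
next
  assume R: "(\<exists>B. \<forall>n. summable (\<lambda>k. \<bar>M n k\<bar>) \<and> (\<Sum>k. \<bar>M n k\<bar>) \<le> B)
     \<and> (\<forall>k. (\<lambda>n. M n k) \<longlonglongrightarrow> 0)"
  then obtain B where rows: "\<And>n. summable (\<lambda>k. \<bar>M n k\<bar>)" and B: "\<And>n. (\<Sum>k. \<bar>M n k\<bar>) \<le> B"
    and cols: "\<And>k. (\<lambda>n. M n k) \<longlonglongrightarrow> 0" by blast
  show "matrix_class c0_space c0_space M"
    unfolding matrix_class_def
  proof
    fix x assume "x \<in> c0_space"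
    hence x: "x \<longlonglongrightarrow> 0" by (simp add: c0_lim)
    from suf_c0[OF rows B cols x]
    show "(\<forall>n. summable (\<lambda>k. M n k * x k)) \<and> (\<lambda>n. \<Sum>k. M n k * x k) \<in> c0_space"
      by (simp add: c0_lim)
  qed
qed

lemma part4:
  "matrix_class l1_space c0_space M \<longleftrightarrow>
     (\<forall>k. (\<lambda>n. M n k) \<longlonglongrightarrow> 0) \<and> (\<exists>B. \<forall>n k. \<bar>M n k\<bar> \<le> B)"
proof
  assume A: "matrix_class l1_space c0_space M"
  show "(\<forall>k. (\<lambda>n. M n k) \<longlonglongrightarrow> 0) \<and> (\<exists>B. \<forall>n k. \<bar>M n k\<bar> \<le> B)"
    using nec_bound_l1[OF A c0_sub_linf] mc_col[OF A ev_in(1)] by (simp add: c0_lim)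
next
  assume R: "(\<forall>k. (\<lambda>n. M n k) \<longlonglongrightarrow> 0) \<and> (\<exists>B. \<forall>n k. \<bar>M n k\<bar> \<le> B)"
  then obtain B where cols: "\<And>k. (\<lambda>n. M n k) \<longlonglongrightarrow> 0" and B: "\<And>n k. \<bar>M n k\<bar> \<le> B" by blast
  show "matrix_class l1_space c0_space M"
    unfolding matrix_class_def
  proof
    fix x assume "x \<in> l1_space"
    hence x: "summable (\<lambda>k. \<bar>x k\<bar>)" by (simp add: l1_space_def)
    from suf_l1[OF B cols x]
    show "(\<forall>n. summable (\<lambda>k. M n k * x k)) \<and> (\<lambda>n. \<Sum>k. M n k * x k) \<in> c0_space"
      by (simp add: c0_lim)
  qed
qed

lemma part5:
  "matrix_class linf_space c_space M \<longleftrightarrow>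
     (\<exists>a. (\<forall>k. (\<lambda>n. M n k) \<longlonglongrightarrow> a k)
          \<and> (\<forall>n. summable (\<lambda>k. \<bar>M n k\<bar>))
          \<and> summable (\<lambda>k. \<bar>a k\<bar>)
          \<and> (\<lambda>m. \<Sum>k. \<bar>M m k\<bar>) \<longlonglongrightarrow> (\<Sum>k. \<bar>a k\<bar>))"
proof
  assume A: "matrix_class linf_space c_space M"
  have A0: "matrix_class c0_space c_space M" by (rule mc_mono[OF c0_sub_linf _ A]) simp
  have rows: "\<And>n. summable (\<lambda>k. \<bar>M n k\<bar>)" by (rule nec_rows[OF A0])
  obtain B where B: "\<And>n. (\<Sum>k. \<bar>M n k\<bar>) \<le> B" using nec_bound[OF A0 c_sub_linf] by blast
  define a where "a k = lim (\<lambda>n. M n k)" for k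
  have cols: "(\<lambda>n. M n k) \<longlonglongrightarrow> a k" for k
    using mc_col[OF A ev_in(4)] by (simp add: c_space_def a_def convergent_LIMSEQ_iff)
  have S: "summable (\<lambda>k. \<bar>a k\<bar>) \<and> (\<lambda>n. \<Sum>k. \<bar>M n k - a k\<bar>) \<longlonglongrightarrow> 0"
  proof (rule schur[OF rows B cols])
    fix x :: "nat \<Rightarrow> real" assume "\<forall>k. \<bar>x k\<bar> \<le> 1"
    hence "x \<in> linf_space" by (auto simp: linf_iff)
    thus "convergent (\<lambda>n. \<Sum>k. M n k * x k)" using A by (auto simp: matrix_class_def c_space_def)
  qed
  hence sa: "summable (\<lambda>k. \<bar>a k\<bar>)" and D: "(\<lambda>n. \<Sum>k. \<bar>M n k - a k\<bar>) \<longlonglongrightarrow> 0" by auto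
  have "(\<lambda>n. (\<Sum>k. \<bar>M n k\<bar>) - (\<Sum>k. \<bar>a k\<bar>)) \<longlonglongrightarrow> 0"
  proof (rule Lim_null_comparison[OF _ D], rule always_eventually, rule allI)
    fix n
    have d: "summable (\<lambda>k. \<bar>M n k - a k\<bar>)" by (rule summable_absdiff(1)[OF rows sa])
    have na: "summable (\<lambda>k. \<bar>- a k\<bar>)" using sa by simp
    have 1: "(\<Sum>k. \<bar>M n k\<bar>) \<le> (\<Sum>k. \<bar>M n k - a k\<bar>) + (\<Sum>k. \<bar>a k\<bar>)"
      using summable_absdiff(2)[OF d na] by simp
    have 2: "(\<Sum>k. \<bar>a k\<bar>) \<le> (\<Sum>k. \<bar>M n k - a k\<bar>) + (\<Sum>k. \<bar>M n k\<bar>)"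
    proof -
      have d': "summable (\<lambda>k. \<bar>a k - M n k\<bar>)" by (rule summable_absdiff(1)[OF sa rows])
      have nM: "summable (\<lambda>k. \<bar>- M n k\<bar>)" using rows[of n] by simp
      have "(\<Sum>k. \<bar>a k\<bar>) \<le> (\<Sum>k. \<bar>a k - M n k\<bar>) + (\<Sum>k. \<bar>M n k\<bar>)"
        using summable_absdiff(2)[OF d' nM] by simp
      moreover have "(\<lambda>k. \<bar>a k - M n k\<bar>) = (\<lambda>k. \<bar>M n k - a k\<bar>)" by (simp add: abs_minus_commute)
      ultimately show ?thesis by simp
    qed
    show "norm ((\<Sum>k. \<bar>M n k\<bar>) - (\<Sum>k. \<bar>a k\<bar>)) \<le> (\<Sum>k. \<bar>M n k - a k\<bar>)"
      using 1 2 by simp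
  qed
  hence "(\<lambda>m. \<Sum>k. \<bar>M m k\<bar>) \<longlonglongrightarrow> (\<Sum>k. \<bar>a k\<bar>)"
    using tendsto_add[OF _ tendsto_const[of "\<Sum>k. \<bar>a k\<bar>"]] by fastforce
  thus "\<exists>a. (\<forall>k. (\<lambda>n. M n k) \<longlonglongrightarrow> a k) \<and> (\<forall>n. summable (\<lambda>k. \<bar>M n k\<bar>))
          \<and> summable (\<lambda>k. \<bar>a k\<bar>) \<and> (\<lambda>m. \<Sum>k. \<bar>M m k\<bar>) \<longlonglongrightarrow> (\<Sum>k. \<bar>a k\<bar>)"
    using cols rows sa by blast
next
  assume "\<exists>a. (\<forall>k. (\<lambda>n. M n k) \<longlonglongrightarrow> a k) \<and> (\<forall>n. summable (\<lambda>k. \<bar>M n k\<bar>))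
          \<and> summable (\<lambda>k. \<bar>a k\<bar>) \<and> (\<lambda>m. \<Sum>k. \<bar>M m k\<bar>) \<longlonglongrightarrow> (\<Sum>k. \<bar>a k\<bar>)"
  then obtain a where cols: "\<And>k. (\<lambda>n. M n k) \<longlonglongrightarrow> a k" and rows: "\<And>n. summable (\<lambda>k. \<bar>M n k\<bar>)"
    and sa: "summable (\<lambda>k. \<bar>a k\<bar>)" and nrm: "(\<lambda>m. \<Sum>k. \<bar>M m k\<bar>) \<longlonglongrightarrow> (\<Sum>k. \<bar>a k\<bar>)" by blast
  show "matrix_class linf_space c_space M"
    unfolding matrix_class_def
  proof
    fix x assume "x \<in> linf_space"
    then obtain X where X: "\<forall>k. \<bar>x k\<bar> \<le> X" by (auto simp: linf_iff)
    from suf_linf[OF rows cols sa nrm X]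
    show "(\<forall>n. summable (\<lambda>k. M n k * x k)) \<and> (\<lambda>n. \<Sum>k. M n k * x k) \<in> c_space"
      by (auto simp: c_lim)
  qed
qed

lemma part6:
  "matrix_class c_space c_space M \<longleftrightarrow>
     (\<exists>B. \<forall>n. summable (\<lambda>k. \<bar>M n k\<bar>) \<and> (\<Sum>k. \<bar>M n k\<bar>) \<le> B)
     \<and> (\<forall>k. convergent (\<lambda>n. M n k))
     \<and> convergent (\<lambda>n. \<Sum>k. M n k)"
proof
  assume A: "matrix_class c_space c_space M"
  have A0: "matrix_class c0_space c_space M" by (rule mc_mono[OF c0_sub_c _ A]) simp
  show "(\<exists>B. \<forall>n. summable (\<lambda>k. \<bar>M n k\<bar>) \<and> (\<Sum>k. \<bar>M n k\<bar>) \<le> B)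
     \<and> (\<forall>k. convergent (\<lambda>n. M n k)) \<and> convergent (\<lambda>n. \<Sum>k. M n k)"
    using nec_bound[OF A0 c_sub_linf] mc_col[OF A ev_in(3)] mc_rowsum[OF A] by (simp add: c_space_def)
next
  assume R: "(\<exists>B. \<forall>n. summable (\<lambda>k. \<bar>M n k\<bar>) \<and> (\<Sum>k. \<bar>M n k\<bar>) \<le> B)
     \<and> (\<forall>k. convergent (\<lambda>n. M n k)) \<and> convergent (\<lambda>n. \<Sum>k. M n k)"
  then obtain B where rows: "\<And>n. summable (\<lambda>k. \<bar>M n k\<bar>)" and B: "\<And>n. (\<Sum>k. \<bar>M n k\<bar>) \<le> B"
    and cc: "\<And>k. convergent (\<lambda>n. M n k)" and rc: "convergent (\<lambda>n. \<Sum>k. M n k)" by blast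
  have cols: "(\<lambda>n. M n k) \<longlonglongrightarrow> lim (\<lambda>n. M n k)" for k using cc[of k] by (simp add: convergent_LIMSEQ_iff)
  have rs: "(\<lambda>n. \<Sum>k. M n k) \<longlonglongrightarrow> lim (\<lambda>n. \<Sum>k. M n k)" using rc by (simp add: convergent_LIMSEQ_iff)
  show "matrix_class c_space c_space M"
    unfolding matrix_class_def
  proof
    fix x assume "x \<in> c_space"
    then obtain l where x: "x \<longlonglongrightarrow> l" by (auto simp: c_lim)
    from suf_c[OF rows B cols rs x]
    show "(\<forall>n. summable (\<lambda>k. M n k * x k)) \<and> (\<lambda>n. \<Sum>k. M n k * x k) \<in> c_space"
      by (auto simp: c_lim)
  qed
qed

lemma part7:
  "matrix_class c0_space c_space M \<longleftrightarrow>
     (\<exists>B. \<forall>n. summable (\<lambda>k. \<bar>M n k\<bar>) \<and> (\<Sum>k. \<bar>M n k\<bar>) \<le> B)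
     \<and> (\<forall>k. convergent (\<lambda>n. M n k))"
proof
  assume A: "matrix_class c0_space c_space M"
  show "(\<exists>B. \<forall>n. summable (\<lambda>k. \<bar>M n k\<bar>) \<and> (\<Sum>k. \<bar>M n k\<bar>) \<le> B)
     \<and> (\<forall>k. convergent (\<lambda>n. M n k))"
    using nec_bound[OF A c_sub_linf] mc_col[OF A ev_in(2)] by (simp add: c_space_def)
next
  assume R: "(\<exists>B. \<forall>n. summable (\<lambda>k. \<bar>M n k\<bar>) \<and> (\<Sum>k. \<bar>M n k\<bar>) \<le> B)
     \<and> (\<forall>k. convergent (\<lambda>n. M n k))"
  then obtain B where rows: "\<And>n. summable (\<lambda>k. \<bar>M n k\<bar>)" and B: "\<And>n. (\<Sum>k. \<bar>M n k\<bar>) \<le> B"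
    and cc: "\<And>k. convergent (\<lambda>n. M n k)" by blast
  have cols: "(\<lambda>n. M n k) \<longlonglongrightarrow> lim (\<lambda>n. M n k)" for k using cc[of k] by (simp add: convergent_LIMSEQ_iff)
  show "matrix_class c0_space c_space M"
    unfolding matrix_class_def
  proof
    fix x assume "x \<in> c0_space"
    hence x: "x \<longlonglongrightarrow> 0" by (simp add: c0_lim)
    from suf_c0[OF rows B cols x]
    show "(\<forall>n. summable (\<lambda>k. M n k * x k)) \<and> (\<lambda>n. \<Sum>k. M n k * x k) \<in> c_space"
      by (auto simp: c_lim)
  qed
qed

lemma part8:
  "matrix_class l1_space c_space M \<longleftrightarrow>
     (\<forall>k. convergent (\<lambda>n. M n k)) \<and> (\<exists>B. \<forall>n k. \<bar>M n k\<bar> \<le> B)"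
proof
  assume A: "matrix_class l1_space c_space M"
  show "(\<forall>k. convergent (\<lambda>n. M n k)) \<and> (\<exists>B. \<forall>n k. \<bar>M n k\<bar> \<le> B)"
    using nec_bound_l1[OF A c_sub_linf] mc_col[OF A ev_in(1)] by (simp add: c_space_def)
next
  assume R: "(\<forall>k. convergent (\<lambda>n. M n k)) \<and> (\<exists>B. \<forall>n k. \<bar>M n k\<bar> \<le> B)"
  then obtain B where cc: "\<And>k. convergent (\<lambda>n. M n k)" and B: "\<And>n k. \<bar>M n k\<bar> \<le> B" by blast
  have cols: "(\<lambda>n. M n k) \<longlonglongrightarrow> lim (\<lambda>n. M n k)" for k using cc[of k] by (simp add: convergent_LIMSEQ_iff)
  show "matrix_class l1_space c_space M"
    unfolding matrix_class_def
  proof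
    fix x assume "x \<in> l1_space"
    hence x: "summable (\<lambda>k. \<bar>x k\<bar>)" by (simp add: l1_space_def)
    from suf_l1[where a="\<lambda>k. lim (\<lambda>n. M n k)", OF B cols x]
    show "(\<forall>n. summable (\<lambda>k. M n k * x k)) \<and> (\<lambda>n. \<Sum>k. M n k * x k) \<in> c_space"
      by (auto simp: c_lim)
  qed
qed


theorem corollary2:
  fixes \<alpha> :: real and u :: "nat \<Rightarrow> real" and A :: "nat \<Rightarrow> nat \<Rightarrow> real"
  assumes "0 < \<alpha>" and "\<alpha> < 1" and "\<forall>k. u k \<noteq> 0"
  defines "b \<equiv> B_matrix \<alpha> u A"
  shows
   "(matrix_class linf_space (gen_space c0_space \<alpha> u) A \<longleftrightarrow>
       (\<forall>n. summable (\<lambda>k. \<bar>b n k\<bar>)) \<and> (\<lambda>n. \<Sum>k. \<bar>b n k\<bar>) \<longlonglongrightarrow> 0)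
    \<and> (matrix_class c_space (gen_space c0_space \<alpha> u) A \<longleftrightarrow>
       (\<exists>M. \<forall>n. summable (\<lambda>k. \<bar>b n k\<bar>) \<and> (\<Sum>k. \<bar>b n k\<bar>) \<le> M)
       \<and> (\<forall>k. (\<lambda>n. b n k) \<longlonglongrightarrow> 0)
       \<and> (\<lambda>n. \<Sum>k. b n k) \<longlonglongrightarrow> 0)
    \<and> (matrix_class c0_space (gen_space c0_space \<alpha> u) A \<longleftrightarrow>
       (\<exists>M. \<forall>n. summable (\<lambda>k. \<bar>b n k\<bar>) \<and> (\<Sum>k. \<bar>b n k\<bar>) \<le> M)
       \<and> (\<forall>k. (\<lambda>n. b n k) \<longlonglongrightarrow> 0))
    \<and> (matrix_class l1_space (gen_space c0_space \<alpha> u) A \<longleftrightarrow>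
       (\<forall>k. (\<lambda>n. b n k) \<longlonglongrightarrow> 0)
       \<and> (\<exists>M. \<forall>n k. \<bar>b n k\<bar> \<le> M))
    \<and> (matrix_class linf_space (gen_space c_space \<alpha> u) A \<longleftrightarrow>
       (\<exists>a. (\<forall>k. (\<lambda>n. b n k) \<longlonglongrightarrow> a k)
          \<and> (\<forall>n. summable (\<lambda>k. \<bar>b n k\<bar>))
          \<and> summable (\<lambda>k. \<bar>a k\<bar>)
          \<and> (\<lambda>m. \<Sum>k. \<bar>b m k\<bar>) \<longlonglongrightarrow> (\<Sum>k. \<bar>a k\<bar>)))
    \<and> (matrix_class c_space (gen_space c_space \<alpha> u) A \<longleftrightarrow>
       (\<exists>M. \<forall>n. summable (\<lambda>k. \<bar>b n k\<bar>) \<and> (\<Sum>k. \<bar>b n k\<bar>) \<le> M)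
       \<and> (\<forall>k. convergent (\<lambda>n. b n k))
       \<and> convergent (\<lambda>n. \<Sum>k. b n k))
    \<and> (matrix_class c0_space (gen_space c_space \<alpha> u) A \<longleftrightarrow>
       (\<exists>M. \<forall>n. summable (\<lambda>k. \<bar>b n k\<bar>) \<and> (\<Sum>k. \<bar>b n k\<bar>) \<le> M)
       \<and> (\<forall>k. convergent (\<lambda>n. b n k)))
    \<and> (matrix_class l1_space (gen_space c_space \<alpha> u) A \<longleftrightarrow>
       (\<forall>k. convergent (\<lambda>n. b n k))
       \<and> (\<exists>M. \<forall>n k. \<bar>b n k\<bar> \<le> M))"
  proof -
  have fc: "frac_coeff \<alpha> 0 = 1" using fc0 assms(1) by simp
  note R = reduce[OF fc assms(3)]
  show ?thesis unfolding R b_def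
    by (intro conjI part1 part2 part3 part4 part5 part6 part7 part8)
qed

end
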